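(* Let $\mathcal D$ be a dyadic grid on $\mathbb T$, let $v$ be a weight on $\mathbb D$ that is doubling with respect to $\mathcal D$ with constant $c_v$, and let $w\in\mathrm{B}_\infty(\mathcal D,v)$ satisfy the APR($\mathcal D$) condition. Then there exists $\tau>1$, depending only on $[w]_{\mathrm{B}_\infty(\mathcal D,v)}$ and $c_v$, such that $w\in\mathrm{RH}_\tau(\mathcal D,v)$.
   Context: $\mathbb D$ is the open unit disc, $\mathbb T$ the unit circle, $dA$ normalized area measure. A weight is a locally integrable, a.e. positive function. For measurable $f$, $0<p<\infty$, weight $v$, measurable $E$: $\langle f\rangle_{p,v,E}=\big(\int_E|f|^pv\,dA\big)^{1/p}/\big(\int_Ev\,dA\big)^{1/p}$, $\langle f\rangle_{v,E}=\langle f\rangle_{1,v,E}$. For an arc $I\subset\mathbb T$ with center $e^{i\theta_0}$ and normalized arclength $\ell(I)$ ($\ell(\mathbb T)=1$), $Q_I=\{re^{i\theta}\in\mathbb D:1-r\le\ell(I),|\theta-\theta_0|\le\ell(I)/2\}$ and $T_I=\{re^{i\theta}\in\mathbb D:\ell(I)/2\le1-r\le\ell(I),|\theta-\theta_0|\le\ell(I)/2\}$. A dyadic grid $\mathcal D$ is a collection of arcs of $\mathbb T$ such that: for each $k\in\mathbb N$, $\{I\in\mathcal D:\ell(I)=2^{-k}\}$ partitions $\mathbb T$; $\{T_I:I\in\mathcal D\}$ partitions $\mathbb D$; any two arcs of $\mathcal D$ are disjoint or nested; each $I\in\mathcal D$ is the union of $2^k$ arcs of $\mathcal D$ of length $2^{-k}\ell(I)$.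 $v$ is doubling with respect to $\mathcal D$ if there is $c_v>0$ such that for all $I\subset J$ in $\mathcal D$ with $\ell(J)=2\ell(I)$, $c_v^{-1}\int_{Q_J}v\,dA\le\int_{Q_I}v\,dA\le c_v\int_{T_I}v\,dA$. $M_v^{\mathcal D}f(z)=\sup_{I\in\mathcal D:z\in Q_I}\langle f\rangle_{v,Q_I}$. $w\in\mathrm{B}_\infty(\mathcal D,v)$ if $[w]_{\mathrm{B}_\infty(\mathcal D,v)}=\sup_{I\in\mathcal D}\langle M_v^{\mathcal D}(w\chi_{Q_I})\rangle_{v,Q_I}/\langle w\rangle_{v,Q_I}<\infty$. $w$ satisfies APR($\mathcal D$) if there is $C>0$ with $C^{-1}w(z_2)\le w(z_1)\le Cw(z_2)$ for all $z_1,z_2\in T_I$ and all $I\in\mathcal D$. For $1<s<\infty$, $w\in\mathrm{RH}_s(\mathcal D,v)$ if $\sup_{I\in\mathcal D}\langle w\rangle_{s,v,Q_I}(\langle w\rangle_{v,Q_I})^{-1}<\infty$. *)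

theory Defs
  imports "HOL-Analysis.Analysis"
begin

text \<open>Normalized area measure dA on the plane (only sets inside the unit disc are used).\<close>
definition dA :: "complex measure" where
  "dA = density lebesgue (\<lambda>_. ennreal (1 / pi))"

text \<open>An arc of the unit circle is represented by a pair (c, l): c is the centre in normalized
  angle units (the centre is cis (2 pi c)) and l = normalized arclength, 0 < l <= 1.\<close>
type_synonym arc = "real \<times> real"

definition arc_len :: "arc \<Rightarrow> real" where
  "arc_len I = snd I"

definition arc_set :: "arc \<Rightarrow> complex set" where
  "arc_set I = {cis (2 * pi * t) | t. \<bar>t - fst I\<bar> \<le> snd I / 2}"

definition Qbox :: "arc \<Rightarrow> complex set" where
  "Qbox I = {complex_of_real r * cis (2 * pi * t) | r t.
      0 \<le> r \<and> r < 1 \<and> 1 - r \<le> snd I \<and> \<bar>t - fst I\<bar> \<le> snd I / 2}"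

definition Tbox :: "arc \<Rightarrow> complex set" where
  "Tbox I = {complex_of_real r * cis (2 * pi * t) | r t.
      0 \<le> r \<and> r < 1 \<and> snd I / 2 \<le> 1 - r \<and> 1 - r \<le> snd I \<and> \<bar>t - fst I\<bar> \<le> snd I / 2}"

text \<open>Since arcs and the sets T_I are closed, "partition" and "disjoint" are
  understood up to boundaries: distinct arcs meet in finitely many points, distinct T_I meet
  in a Lebesgue-null set.\<close>
definition dyadic_grid :: "arc set \<Rightarrow> bool" where
  "dyadic_grid D \<longleftrightarrow>
     (\<forall>I\<in>D. 0 < arc_len I \<and> arc_len I \<le> 1) \<and>
     (\<forall>k::nat. (\<Union>I\<in>{I\<in>D. arc_len I = 1 / 2 ^ k}. arc_set I) = sphere 0 1 \<and>
               pairwise (\<lambda>I J. finite (arc_set I \<inter> arc_set J)) {I\<in>D. arc_len I = 1 / 2 ^ k}) \<and>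
     (\<Union>I\<in>D. Tbox I) = ball 0 1 \<and>
     pairwise (\<lambda>I J. Tbox I \<inter> Tbox J \<in> null_sets lebesgue) D \<and>
     (\<forall>I\<in>D. \<forall>J\<in>D. arc_set I \<subseteq> arc_set J \<or> arc_set J \<subseteq> arc_set I \<or>
                     finite (arc_set I \<inter> arc_set J)) \<and>
     (\<forall>I\<in>D. \<forall>k::nat. \<exists>S\<subseteq>D. card S = 2 ^ k \<and> (\<forall>J\<in>S. arc_len J = arc_len I / 2 ^ k) \<and>
                     arc_set I = (\<Union>J\<in>S. arc_set J))"

definition weight :: "(complex \<Rightarrow> real) \<Rightarrow> bool" where
  "weight v \<longleftrightarrow> v \<in> borel_measurable lebesgue \<and>
     (\<forall>K. compact K \<and> K \<subseteq> ball 0 1 \<longrightarrow> set_integrable dA K v) \<and>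
     (AE z in dA. z \<in> ball 0 1 \<longrightarrow> 0 < v z)"

definition vmass :: "(complex \<Rightarrow> real) \<Rightarrow> complex set \<Rightarrow> ennreal" where
  "vmass v E = (\<integral>\<^sup>+ z\<in>E. ennreal (v z) \<partial>dA)"

definition avg :: "(complex \<Rightarrow> real) \<Rightarrow> complex set \<Rightarrow> (complex \<Rightarrow> ennreal) \<Rightarrow> ennreal" where
  "avg v E f = (\<integral>\<^sup>+ z\<in>E. f z * ennreal (v z) \<partial>dA) / vmass v E"

definition avgp :: "real \<Rightarrow> (complex \<Rightarrow> real) \<Rightarrow> complex set \<Rightarrow> (complex \<Rightarrow> real) \<Rightarrow> ennreal" where
  "avgp p v E f = (let a = avg v E (\<lambda>z. ennreal (\<bar>f z\<bar> powr p)) in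
      if a = top then top else ennreal (enn2real a powr (1 / p)))"

definition doubling :: "arc set \<Rightarrow> (complex \<Rightarrow> real) \<Rightarrow> real \<Rightarrow> bool" where
  "doubling D v c \<longleftrightarrow> 0 < c \<and>
     (\<forall>I\<in>D. \<forall>J\<in>D. arc_set I \<subseteq> arc_set J \<and> arc_len J = 2 * arc_len I \<longrightarrow>
        ennreal (1 / c) * vmass v (Qbox J) \<le> vmass v (Qbox I) \<and>
        vmass v (Qbox I) \<le> ennreal c * vmass v (Tbox I))"

definition dyadic_max :: "arc set \<Rightarrow> (complex \<Rightarrow> real) \<Rightarrow> (complex \<Rightarrow> ennreal) \<Rightarrow> complex \<Rightarrow> ennreal" where
  "dyadic_max D v f z = (SUP I\<in>{I\<in>D. z \<in> Qbox I}. avg v (Qbox I) f)"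

definition Binf_const :: "arc set \<Rightarrow> (complex \<Rightarrow> real) \<Rightarrow> (complex \<Rightarrow> real) \<Rightarrow> ennreal" where
  "Binf_const D v w = (SUP I\<in>D.
      avg v (Qbox I) (dyadic_max D v (\<lambda>z. ennreal (\<bar>w z\<bar>) * indicator (Qbox I) z))
      / avg v (Qbox I) (\<lambda>z. ennreal \<bar>w z\<bar>))"

definition Binf :: "arc set \<Rightarrow> (complex \<Rightarrow> real) \<Rightarrow> (complex \<Rightarrow> real) \<Rightarrow> bool" where
  "Binf D v w \<longleftrightarrow> (\<forall>I\<in>D. avg v (Qbox I) (\<lambda>z. ennreal \<bar>w z\<bar>) < top) \<and> Binf_const D v w < top"

definition APR :: "arc set \<Rightarrow> (complex \<Rightarrow> real) \<Rightarrow> bool" where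
  "APR D w \<longleftrightarrow> (\<exists>C>0. \<forall>I\<in>D. \<forall>z1\<in>Tbox I. \<forall>z2\<in>Tbox I.
      w z2 / C \<le> w z1 \<and> w z1 \<le> C * w z2)"

definition RH :: "arc set \<Rightarrow> (complex \<Rightarrow> real) \<Rightarrow> real \<Rightarrow> (complex \<Rightarrow> real) \<Rightarrow> bool" where
  "RH D v s w \<longleftrightarrow> 1 < s \<and> (\<forall>I\<in>D. avg v (Qbox I) (\<lambda>z. ennreal \<bar>w z\<bar>) < top) \<and>
     (SUP I\<in>D. avgp s v (Qbox I) w / avg v (Qbox I) (\<lambda>z. ennreal \<bar>w z\<bar>)) < top"

end

theory Submission
  imports Defs
begin

definition pol :: "arc \<Rightarrow> real \<Rightarrow> real \<Rightarrow> complex set" where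
  "pol A a b = {complex_of_real r * u | r u. u \<in> arc_set A \<and> 0 \<le> r \<and> r < 1 \<and> a \<le> 1 - r \<and> 1 - r \<le> b}"

definition rays :: "complex set \<Rightarrow> complex set" where
  "rays U = {complex_of_real r * u | r u. u \<in> U}"

lemma Tbox_pol: "Tbox I = pol I (snd I / 2) (snd I)"
proof (rule set_eqI, rule iffI)
  fix z assume "z \<in> Tbox I"
  then obtain r t where "z = complex_of_real r * cis (2*pi*t)" "0 \<le> r" "r<1" "snd I / 2 \<le> 1-r" "1-r \<le> snd I" "\<bar>t - fst I\<bar> \<le> snd I/2"
    unfolding Tbox_def by blast
  moreover have "cis(2*pi*t) \<in> arc_set I" using calculation unfolding arc_set_def by blast
  ultimately show "z \<in> pol I (snd I / 2) (snd I)" unfolding pol_def by blast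
next
  fix z assume "z \<in> pol I (snd I / 2) (snd I)"
  then obtain r u where "z = complex_of_real r * u" "u \<in> arc_set I" "0 \<le> r" "r<1" "snd I / 2 \<le> 1-r" "1-r \<le> snd I"
    unfolding pol_def by blast
  moreover obtain t where "u = cis (2*pi*t)" "\<bar>t - fst I\<bar> \<le> snd I/2" using calculation(2) unfolding arc_set_def by blast
  ultimately show "z \<in> Tbox I" unfolding Tbox_def by blast
qed

lemma Qbox_pol: "Qbox I = pol I 0 (snd I)"
proof (rule set_eqI, rule iffI)
  fix z assume "z \<in> Qbox I"
  then obtain r t where "z = complex_of_real r * cis (2*pi*t)" "0 \<le> r" "r<1" "1-r \<le> snd I" "\<bar>t - fst I\<bar> \<le> snd I/2"
    unfolding Qbox_def by blast
  moreover have "cis(2*pi*t) \<in> arc_set I" using calculation unfolding arc_set_def by blast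
  moreover have "0 \<le> 1 - r" using calculation by simp
  ultimately show "z \<in> pol I 0 (snd I)" unfolding pol_def by blast
next
  fix z assume "z \<in> pol I 0 (snd I)"
  then obtain r u where "z = complex_of_real r * u" "u \<in> arc_set I" "0 \<le> r" "r<1" "1-r \<le> snd I"
    unfolding pol_def by blast
  moreover obtain t where "u = cis (2*pi*t)" "\<bar>t - fst I\<bar> \<le> snd I/2" using calculation(2) unfolding arc_set_def by blast
  ultimately show "z \<in> Qbox I" unfolding Qbox_def by blast
qed

lemma arc_norm: "u \<in> arc_set A \<Longrightarrow> norm u = 1"
  unfolding arc_set_def by auto

lemma pol_mono: "arc_set A \<subseteq> arc_set B \<Longrightarrow> a' \<le> a \<Longrightarrow> b \<le> b' \<Longrightarrow> pol A a b \<subseteq> pol B a' b'"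
  unfolding pol_def by fastforce

lemma pol_Int: "pol A a b \<inter> pol B a' b' \<subseteq> rays (arc_set A \<inter> arc_set B) \<union> {0}"
proof
  fix z assume "z \<in> pol A a b \<inter> pol B a' b'"
  then obtain r u r' u' where z: "z = complex_of_real r * u" "u \<in> arc_set A" "0 \<le> r"
     "z = complex_of_real r' * u'" "u' \<in> arc_set B" "0 \<le> r'"
    unfolding pol_def by blast
  have nu: "norm u = 1" "norm u' = 1" using z arc_norm by auto
  have "norm z = r" using z(1,3) nu(1) by (simp add: norm_mult)
  have "norm z = r'" using z(4,6) nu(2) by (simp add: norm_mult)
  show "z \<in> rays (arc_set A \<inter> arc_set B) \<union> {0}"
  proof (cases "r = 0")
    case True then show ?thesis using z by auto
  next
    case False
    then have "u = u'" using z \<open>norm z = r\<close> \<open>norm z = r'\<close> by auto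
    then show ?thesis using z unfolding rays_def by blast
  qed
qed

lemma rays_null: assumes "finite U" shows "negligible (rays U \<union> {0})"
proof -
  have "rays U \<union> {0} \<subseteq> \<Union>((\<lambda>u. span {u}) ` U) \<union> span {}"
    unfolding rays_def by (auto simp: span_singleton scaleR_conv_of_real)
  moreover have "negligible (span {u})" for u :: complex
  proof (rule negligible_lowdim)
    have "dim (span {u}) = dim {u}" by (rule dim_span)
    also have "\<dots> \<le> card {u}" by (rule dim_le_card') simp
    finally have "dim (span {u}) \<le> 1" by simp
    then show "dim (span {u}) < DIM(complex)" by simp
  qed
  moreover have "negligible (\<Union>((\<lambda>u. span {u}) ` U))"
    using assms \<open>\<And>u. negligible (span {u})\<close> by (intro negligible_Union) auto
  moreover have "negligible (span ({}::complex set))" by simp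
  ultimately show ?thesis
    by (meson negligible_Un negligible_subset)
qed

lemma pol_not_negligible:
  assumes "0 < snd A" "0 \<le> a" "a < b" "b \<le> 1"
  shows "\<not> negligible (pol A a b)"
proof
  assume neg: "negligible (pol A a b)"
  define u0 where "u0 = cis (2*pi*fst A)"
  define r0 where "r0 = 1 - (a+b)/2"
  have r0: "0 < r0" "r0 < 1" using assms unfolding r0_def by auto
  have "complex_of_real r0 \<notin> \<real>\<^sub>\<le>\<^sub>0" using r0 by (simp add: complex_nonpos_Reals_iff)
  then have "continuous (at (complex_of_real r0)) Arg" by (rule continuous_at_Arg)
  moreover have "0 < pi * snd A" using assms by simp
  ultimately obtain d1 where d1: "d1 > 0" "\<And>y. dist y (complex_of_real r0) < d1 \<Longrightarrow> dist (Arg y) (Arg (complex_of_real r0)) < pi * snd A"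
    unfolding continuous_at_eps_delta by metis
  define d where "d = min d1 ((b-a)/2)"
  have "d > 0" using d1 assms by (simp add: d_def)
  have u0n: "norm u0 = 1" by (simp add: u0_def)
  have "ball (of_real r0 * u0) d \<subseteq> pol A a b"
  proof
    fix z assume z: "z \<in> ball (of_real r0 * u0) d"
    define y where "y = z / u0"
    have u0nz: "u0 \<noteq> 0" using u0n by auto
    have "dist y r0 = norm ((z - of_real r0 * u0) / u0)"
      by (simp add: y_def dist_norm diff_divide_distrib u0nz)
    also have "\<dots> = norm (z - of_real r0 * u0)" by (simp add: norm_divide u0n)
    also have "\<dots> < d" using z by (simp add: dist_norm norm_minus_commute)
    finally have dy: "dist y r0 < d" .
    then have "\<bar>Arg y\<bar> < pi * snd A" using d1(2)[of y] r0 by (simp add: d_def dist_real_def)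
    have "\<bar>norm y - r0\<bar> \<le> norm (y - of_real r0)"
      by (metis norm_of_real norm_triangle_ineq3 abs_of_pos r0(1))
    also have "\<dots> < (b-a)/2" using dy by (simp add: d_def dist_norm)
    finally have ny: "\<bar>norm y - r0\<bar> < (b-a)/2" .
    have "z = y * u0" using u0nz by (simp add: y_def)
    also have "y = complex_of_real (norm y) * cis (Arg y)"
      by (metis rcis_cmod_Arg rcis_def)
    finally have "z = complex_of_real (norm y) * cis (2*pi*(fst A + Arg y / (2*pi)))"
      by (simp add: u0_def mult.assoc cis_mult distrib_left algebra_simps)
    moreover have "cis (2*pi*(fst A + Arg y / (2*pi))) \<in> arc_set A"
    proof -
      have "\<bar>(fst A + Arg y / (2*pi)) - fst A\<bar> \<le> snd A / 2"
        using \<open>\<bar>Arg y\<bar> < pi * snd A\<close> by (simp add: abs_divide field_simps)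
      then show ?thesis unfolding arc_set_def by blast
    qed
    moreover have "0 \<le> norm y" "norm y < 1" "a \<le> 1 - norm y" "1 - norm y \<le> b"
    proof -
      have "norm y - r0 < (b-a)/2" "r0 - norm y < (b-a)/2" using ny by linarith+
      note h = this assms r0_def
      have "norm y < 1" using h by argo
      moreover have "a \<le> 1 - norm y" using h by argo
      moreover have "1 - norm y \<le> b" using h by argo
      ultimately
      show "0 \<le> norm y" "norm y < 1" "a \<le> 1 - norm y" "1 - norm y \<le> b" by simp_all
    qed
    ultimately show "z \<in> pol A a b" unfolding pol_def by blast
  qed
  then have "negligible (ball (of_real r0 * u0) d)" using neg negligible_subset by blast
  then show False using open_not_negligible[of "ball (of_real r0 * u0) d"] \<open>d > 0\<close> by auto
qed

definition pimg :: "real \<times> real \<Rightarrow> complex" where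
  "pimg p = complex_of_real (fst p) * cis (2 * pi * snd p)"

lemma pimg_compact: "compact (pimg ` ({a..b} \<times> {c..d}))"
  unfolding pimg_def
  by (intro compact_continuous_image compact_Times compact_Icc continuous_intros)

lemma closed_sets_lebesgue: "closed S \<Longrightarrow> S \<in> sets lebesgue"
  by (metis borel_closed sets_completionI_sets sets_lborel)

lemma Tbox_img:
  assumes "0 < snd I" "snd I \<le> 1"
  shows "Tbox I = pimg ` ({1 - snd I .. 1 - snd I / 2} \<times> {fst I - snd I / 2 .. fst I + snd I / 2})"
proof (rule set_eqI, rule iffI)
  fix z assume "z \<in> Tbox I"
  then obtain r t where "z = complex_of_real r * cis (2*pi*t)" "0 \<le> r" "r<1" "snd I / 2 \<le> 1-r" "1-r \<le> snd I" "\<bar>t - fst I\<bar> \<le> snd I/2"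
    unfolding Tbox_def by blast
  moreover have "fst I - snd I/2 \<le> t" "t \<le> fst I + snd I/2"
    using abs_le_D1[OF calculation(6)] abs_le_D2[OF calculation(6)] by linarith+
  ultimately show "z \<in> pimg ` ({1 - snd I .. 1 - snd I / 2} \<times> {fst I - snd I / 2 .. fst I + snd I / 2})"
    unfolding pimg_def by (intro image_eqI[of _ _ "(r,t)"]) auto
next
  fix z assume "z \<in> pimg ` ({1 - snd I .. 1 - snd I / 2} \<times> {fst I - snd I / 2 .. fst I + snd I / 2})"
  then obtain r t where "z = complex_of_real r * cis (2*pi*t)" "r \<in> {1 - snd I .. 1 - snd I / 2}" "t \<in> {fst I - snd I / 2 .. fst I + snd I / 2}"
    unfolding pimg_def by auto
  moreover have "\<bar>t - fst I\<bar> \<le> snd I / 2" unfolding abs_le_iff using calculation(3) by auto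
  moreover have "0 \<le> r" "r < 1" "snd I / 2 \<le> 1 - r" "1 - r \<le> snd I" using calculation(2) assms by auto
  ultimately show "z \<in> Tbox I" unfolding Tbox_def by blast
qed

lemma Tbox_compact: "0 < snd I \<Longrightarrow> snd I \<le> 1 \<Longrightarrow> compact (Tbox I)"
  using Tbox_img pimg_compact by metis

lemma Tbox_sets: "0 < snd I \<Longrightarrow> snd I \<le> 1 \<Longrightarrow> Tbox I \<in> sets lebesgue"
  using Tbox_compact closed_sets_lebesgue compact_imp_closed by blast

lemma pol_sub_ball: "pol A a b \<subseteq> ball 0 1"
proof
  fix z assume "z \<in> pol A a b"
  then obtain r u where "z = complex_of_real r * u" "u \<in> arc_set A" "0 \<le> r" "r < 1" unfolding pol_def by blast
  then show "z \<in> ball 0 1" using arc_norm by (auto simp: norm_mult)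
qed

lemma Tbox_sub_ball: "Tbox I \<subseteq> ball 0 1" by (simp add: Tbox_pol pol_sub_ball)
lemma Qbox_sub_ball: "Qbox I \<subseteq> ball 0 1" by (simp add: Qbox_pol pol_sub_ball)

lemma Qbox_Union:
  assumes "0 < snd I" "snd I \<le> 1"
  shows "Qbox I = (\<Union>n. pimg ` ({1 - snd I .. 1 - 1 / Suc n} \<times> {fst I - snd I / 2 .. fst I + snd I / 2}))"
proof (rule set_eqI, rule iffI)
  fix z assume "z \<in> Qbox I"
  then obtain r t where rt: "z = complex_of_real r * cis (2*pi*t)" "0 \<le> r" "r<1" "1-r \<le> snd I" "\<bar>t - fst I\<bar> \<le> snd I/2"
    unfolding Qbox_def by blast
  obtain n where n: "1 / (1 - r) < real (Suc n)"
    by (metis reals_Archimedean2 less_trans of_nat_less_iff lessI)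
  have "1 / Suc n < 1 - r" using n rt(3)
    by (metis diff_gt_0_iff_gt divide_less_eq mult.commute of_nat_0_less_iff zero_less_Suc pos_divide_less_eq)
  then have "r \<le> 1 - 1 / Suc n" by simp
  moreover have "fst I - snd I/2 \<le> t" "t \<le> fst I + snd I/2"
    using abs_le_D1[OF rt(5)] abs_le_D2[OF rt(5)] by linarith+
  ultimately have "z \<in> pimg ` ({1 - snd I .. 1 - 1 / Suc n} \<times> {fst I - snd I / 2 .. fst I + snd I / 2})"
    unfolding pimg_def using rt by (intro image_eqI[of _ _ "(r,t)"]) auto
  then show "z \<in> (\<Union>n. pimg ` ({1 - snd I .. 1 - 1 / Suc n} \<times> {fst I - snd I / 2 .. fst I + snd I / 2}))" by blast
next
  fix z assume "z \<in> (\<Union>n. pimg ` ({1 - snd I .. 1 - 1 / Suc n} \<times> {fst I - snd I / 2 .. fst I + snd I / 2}))"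
  then obtain n r t where "z = complex_of_real r * cis (2*pi*t)" "r \<in> {1 - snd I .. 1 - 1 / Suc n}" "t \<in> {fst I - snd I / 2 .. fst I + snd I / 2}"
    unfolding pimg_def by auto
  moreover have "1 - 1 / real (Suc n) < 1" by simp
  moreover have "\<bar>t - fst I\<bar> \<le> snd I / 2" unfolding abs_le_iff using calculation(3) by auto
  moreover have "0 < 1 / real (Suc n)" by simp
  moreover have "r < 1" using calculation(2,6) unfolding atLeastAtMost_iff by linarith
  moreover have "0 \<le> r" "1 - r \<le> snd I" using calculation(2) assms by auto
  ultimately show "z \<in> Qbox I" unfolding Qbox_def by blast
qed

lemma Qbox_sets: "0 < snd I \<Longrightarrow> snd I \<le> 1 \<Longrightarrow> Qbox I \<in> sets lebesgue"
  apply (subst Qbox_Union, assumption, assumption)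
  apply (rule sets.countable_UN)
  apply (auto intro!: closed_sets_lebesgue compact_imp_closed pimg_compact)
  done

locale grid =
  fixes D :: "arc set"
  assumes dg: "dyadic_grid D"
begin

lemma len: "I \<in> D \<Longrightarrow> 0 < snd I \<and> snd I \<le> 1"
  using dg unfolding dyadic_grid_def arc_len_def by blast

lemma Tnull: "I \<in> D \<Longrightarrow> J \<in> D \<Longrightarrow> I \<noteq> J \<Longrightarrow> negligible (Tbox I \<inter> Tbox J)"
  using dg unfolding dyadic_grid_def pairwise_def negligible_iff_null_sets by blast

lemma nest: "I \<in> D \<Longrightarrow> J \<in> D \<Longrightarrow> arc_set I \<subseteq> arc_set J \<or> arc_set J \<subseteq> arc_set I \<or> finite (arc_set I \<inter> arc_set J)"
  using dg unfolding dyadic_grid_def by blast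

lemma subdiv: "I \<in> D \<Longrightarrow> \<exists>S\<subseteq>D. card S = 2 ^ k \<and> (\<forall>J\<in>S. snd J = snd I / 2 ^ k) \<and> arc_set I = (\<Union>J\<in>S. arc_set J)"
  using dg unfolding dyadic_grid_def arc_len_def by blast

lemma ovl:
  assumes J: "J \<in> D" and S: "S \<subseteq> D" "finite S" and cov: "arc_set J \<subseteq> (\<Union>P\<in>S. arc_set P)"
    and p: "\<forall>P\<in>S. snd P = p" "snd J / 2 < p" "p / 2 < snd J"
  shows "J \<in> S"
proof (rule ccontr)
  assume nJ: "J \<notin> S"
  define a where "a = max (snd J) p / 2"
  define b where "b = min (snd J) p"
  have lJ: "0 < snd J" "snd J \<le> 1" using len J by auto
  have ab: "0 \<le> a" "a < b" "b \<le> 1" using lJ p unfolding a_def b_def by auto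
  have "pol J a b \<subseteq> (\<Union>P\<in>S. Tbox J \<inter> Tbox P)"
  proof
    fix z assume "z \<in> pol J a b"
    then obtain r u where z: "z = complex_of_real r * u" "u \<in> arc_set J" "0 \<le> r" "r < 1" "a \<le> 1 - r" "1 - r \<le> b"
      unfolding pol_def by blast
    then obtain P where P: "P \<in> S" "u \<in> arc_set P" using cov by blast
    have "z \<in> pol J (snd J / 2) (snd J)" using z unfolding pol_def a_def b_def by force
    moreover have "z \<in> pol P (snd P / 2) (snd P)" using z P p unfolding pol_def a_def b_def by force
    ultimately show "z \<in> (\<Union>P\<in>S. Tbox J \<inter> Tbox P)" using P by (auto simp: Tbox_pol)
  qed
  moreover have "negligible (\<Union>P\<in>S. Tbox J \<inter> Tbox P)"
    using S nJ J by (intro negligible_Union) (auto intro!: Tnull)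
  ultimately have "negligible (pol J a b)" using negligible_subset by blast
  then show False using pol_not_negligible[of J a b] ab lJ by auto
qed

lemma ovl2:
  assumes "J \<in> D" "K \<in> D" "arc_set J \<subseteq> arc_set K" "snd J / 2 < snd K" "snd K / 2 < snd J"
  shows "J = K"
  using ovl[of J "{K}" "snd K"] assms by auto

lemma arc_infinite: assumes "J \<in> D" shows "infinite (arc_set J)"
proof
  assume fin: "finite (arc_set J)"
  have "pol J (snd J / 2) (snd J) \<subseteq> rays (arc_set J \<inter> arc_set J) \<union> {0}"
    using pol_Int[of J "snd J / 2" "snd J" J "snd J / 2" "snd J"] by simp
  moreover have "negligible (rays (arc_set J \<inter> arc_set J) \<union> {0})" using fin by (intro rays_null) simp
  ultimately have "negligible (pol J (snd J / 2) (snd J))" using negligible_subset by blast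
  then show False using pol_not_negligible[of J "snd J / 2" "snd J"] len[OF assms] by auto
qed

lemma inf_cover:
  assumes "infinite A" "A \<subseteq> (\<Union>P\<in>S. arc_set P)" "finite S"
  shows "\<exists>P\<in>S. infinite (A \<inter> arc_set P)"
proof (rule ccontr)
  assume "\<not> ?thesis"
  then have "finite (\<Union>P\<in>S. A \<inter> arc_set P)" using assms(3) by (intro finite_UN_I) auto
  moreover have "A = (\<Union>P\<in>S. A \<inter> arc_set P)" using assms(2) by blast
  ultimately show False using assms(1) by simp
qed

lemma subdiv_finite: "card S = 2 ^ k \<Longrightarrow> finite S"
  by (metis card_ge_0_finite pos2 zero_less_power)

lemma LEN:
  assumes J: "J \<in> D" and I: "I \<in> D" and sub: "arc_set J \<subseteq> arc_set I"
  shows "\<exists>k. snd J = snd I / 2 ^ k"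
proof (cases "snd J \<le> snd I")
  case True
  have lJ: "0 < snd J" "snd J \<le> 1" and lI: "0 < snd I" "snd I \<le> 1" using len J I by auto
  have ex: "\<exists>k. snd I / 2 ^ k < snd J"
  proof -
    obtain k where "snd I / snd J < 2 ^ k" using real_arch_pow[of 2 "snd I / snd J"] by auto
    then show ?thesis using lJ by (auto simp: field_simps intro!: exI[of _ k])
  qed
  define n where "n = (LEAST k. snd I / 2 ^ k < snd J)"
  have n1: "snd I / 2 ^ n < snd J" unfolding n_def using ex by (rule LeastI_ex)
  have "n \<noteq> 0"
  proof
    assume "n = 0" then show False using n1 True by simp
  qed
  then obtain k where k: "n = Suc k" by (cases n) auto
  have n2: "\<not> snd I / 2 ^ k < snd J" using k not_less_Least[of k "\<lambda>k. snd I / 2 ^ k < snd J"] unfolding n_def by auto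
  obtain S where S: "S \<subseteq> D" "card S = 2 ^ k" "\<forall>P\<in>S. snd P = snd I / 2 ^ k" "arc_set I = (\<Union>P\<in>S. arc_set P)"
    using subdiv[OF I, of k] by blast
  have "J \<in> S"
  proof (rule ovl[OF J S(1) subdiv_finite[OF S(2)] _ S(3)])
    show "arc_set J \<subseteq> (\<Union>P\<in>S. arc_set P)" using sub S(4) by simp
    have a: "snd J \<le> snd I / 2 ^ k" using n2 by linarith
    have b: "snd J / 2 < snd J" using lJ by simp
    show "snd J / 2 < snd I / 2 ^ k" by (rule less_le_trans[OF b a])
    show "snd I / 2 ^ k / 2 < snd J" using n1 k by (simp add: field_simps)
  qed
  then show ?thesis using S(3) by blast
next
  case False
  have lJ: "0 < snd J" "snd J \<le> 1" and lI: "0 < snd I" "snd I \<le> 1" using len J I by auto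
  have ex: "\<exists>m. snd J / 2 ^ m \<le> snd I"
  proof -
    obtain k where "snd J / snd I < 2 ^ k" using real_arch_pow[of 2 "snd J / snd I"] by auto
    then show ?thesis using lI by (auto simp: field_simps intro!: exI[of _ k])
  qed
  define n where "n = (LEAST k. snd J / 2 ^ k \<le> snd I)"
  have n1: "snd J / 2 ^ n \<le> snd I" unfolding n_def using ex by (rule LeastI_ex)
  have "n \<noteq> 0"
  proof
    assume "n = 0" then show False using n1 False by simp
  qed
  then obtain k where k: "n = Suc k" by (cases n) auto
  have n2: "\<not> snd J / 2 ^ k \<le> snd I" using k not_less_Least[of k "\<lambda>k. snd J / 2 ^ k \<le> snd I"] unfolding n_def by auto
  obtain S where S: "S \<subseteq> D" "card S = 2 ^ n" "\<forall>P\<in>S. snd P = snd J / 2 ^ n" "arc_set J = (\<Union>P\<in>S. arc_set P)"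
    using subdiv[OF J, of n] by blast
  have "S \<subseteq> {I}"
  proof
    fix P assume P: "P \<in> S"
    have "P = I"
    proof (rule ovl2)
      show "P \<in> D" using P S(1) by blast
      show "I \<in> D" by fact
      show "arc_set P \<subseteq> arc_set I" using P S(4) sub by blast
      have "snd P = snd J / 2 ^ n" using P S(3) by simp
      then have "0 < snd P" "snd P \<le> snd I" using n1 lJ by simp_all
      then show "snd P / 2 < snd I" by simp
      have "snd P * 2 = snd J / 2 ^ k" using P S(3) k by simp
      moreover have "snd I < snd J / 2 ^ k" using n2 by (simp only: not_le)
      ultimately show "snd I / 2 < snd P" by simp
    qed
    then show "P \<in> {I}" by simp
  qed
  then have "card S \<le> card {I}" by (intro card_mono) auto
  then have "card S \<le> 1" by simp
  moreover have "card S \<ge> 2" using S(2) k by simp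
  ultimately show ?thesis by simp
qed

lemma nest_len: assumes "J \<in> D" "I \<in> D" "arc_set J \<subseteq> arc_set I" shows "snd J \<le> snd I"
proof -
  obtain k where k: "snd J = snd I / 2 ^ k" using LEN assms by blast
  have "(1::real) \<le> 2 ^ k" by simp
  moreover have "0 \<le> snd I" using len[OF assms(2)] by auto
  ultimately have "snd I / 2 ^ k \<le> snd I / 1" by (intro divide_left_mono) auto
  then show ?thesis using k by simp
qed

lemma level_finite:
  assumes I: "I \<in> D"
  shows "finite {J\<in>D. arc_set J \<subseteq> arc_set I \<and> snd J = snd I / 2 ^ k}"
proof -
  obtain S where S: "S \<subseteq> D" "card S = 2 ^ k" "\<forall>P\<in>S. snd P = snd I / 2 ^ k" "arc_set I = (\<Union>P\<in>S. arc_set P)"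
    using subdiv[OF I, of k] by blast
  have "{J\<in>D. arc_set J \<subseteq> arc_set I \<and> snd J = snd I / 2 ^ k} \<subseteq> S"
  proof
    fix J assume J: "J \<in> {J\<in>D. arc_set J \<subseteq> arc_set I \<and> snd J = snd I / 2 ^ k}"
    have p: "0 < snd I / 2 ^ k" using len[OF I] by simp
    have JD: "J \<in> D" and Jsub: "arc_set J \<subseteq> arc_set I" and Jl: "snd J = snd I / 2 ^ k" using J by auto
    show "J \<in> S"
    proof (rule ovl[OF JD S(1) subdiv_finite[OF S(2)] _ S(3)])
      show "arc_set J \<subseteq> (\<Union>P\<in>S. arc_set P)" using Jsub S(4) by simp
      show "snd J / 2 < snd I / 2 ^ k" using p Jl by simp
      show "snd I / 2 ^ k / 2 < snd J" using p Jl by simp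
    qed
  qed
  then show ?thesis using subdiv_finite[OF S(2)] finite_subset by blast
qed

definition Fam :: "arc \<Rightarrow> nat \<Rightarrow> arc set" where
  "Fam I N = {J\<in>D. arc_set J \<subseteq> arc_set I \<and> snd I / 2 ^ N \<le> snd J}"

lemma Fam_finite:
  assumes I: "I \<in> D" shows "finite (Fam I N)"
proof -
  have "Fam I N \<subseteq> (\<Union>k\<le>N. {J\<in>D. arc_set J \<subseteq> arc_set I \<and> snd J = snd I / 2 ^ k})"
  proof
    fix J assume J: "J \<in> Fam I N"
    then obtain k where k: "snd J = snd I / 2 ^ k" using LEN[of J I] I unfolding Fam_def by blast
    have "snd I / 2 ^ N \<le> snd I / 2 ^ k" using J k unfolding Fam_def by simp
    then have "snd I * 2 ^ k \<le> snd I * 2 ^ N" by (simp add: field_simps)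
    then have "(2::real) ^ k \<le> 2 ^ N" using len[OF I] by simp
    then have "k \<le> N" by (rule power_le_imp_le_exp[rotated]) simp
    then show "J \<in> (\<Union>k\<le>N. {J\<in>D. arc_set J \<subseteq> arc_set I \<and> snd J = snd I / 2 ^ k})" using J k unfolding Fam_def by auto
  qed
  moreover have "finite (\<Union>k\<le>N. {J\<in>D. arc_set J \<subseteq> arc_set I \<and> snd J = snd I / 2 ^ k})"
    using level_finite[OF I] by (intro finite_UN_I) auto
  ultimately show ?thesis by (rule finite_subset)
qed

lemma parent:
  assumes I: "I \<in> D" and J: "J \<in> D" and sub: "arc_set J \<subseteq> arc_set I" and ne: "J \<noteq> I"
  shows "\<exists>P\<in>D. arc_set P \<subseteq> arc_set I \<and> arc_set J \<subseteq> arc_set P \<and> snd P = 2 * snd J"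
proof -
  obtain k where k: "snd J = snd I / 2 ^ k" using LEN[OF J I sub] by blast
  have lI: "0 < snd I" using len I by auto
  have "k \<noteq> 0"
  proof
    assume "k = 0"
    then have "J = I" using ovl2[OF J I sub] k lI by simp
    then show False using ne by simp
  qed
  then obtain k' where k': "k = Suc k'" by (cases k) auto
  obtain S where S: "S \<subseteq> D" "card S = 2 ^ k'" "\<forall>P\<in>S. snd P = snd I / 2 ^ k'" "arc_set I = (\<Union>P\<in>S. arc_set P)"
    using subdiv[OF I, of k'] by blast
  have cv: "arc_set J \<subseteq> (\<Union>P\<in>S. arc_set P)" using sub S(4) by simp
  obtain P where P: "P \<in> S" "infinite (arc_set J \<inter> arc_set P)"
    using inf_cover[OF arc_infinite[OF J] cv subdiv_finite[OF S(2)]] by blast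
  have sP: "snd P = 2 * snd J" using P S(3) k k' by simp
  have PD: "P \<in> D" using P S by blast
  have "arc_set J \<subseteq> arc_set P"
  proof -
    have "\<not> arc_set P \<subseteq> arc_set J"
    proof
      assume "arc_set P \<subseteq> arc_set J"
      then have "snd P \<le> snd J" using nest_len PD J by blast
      then show False using sP len[OF J] by simp
    qed
    then show ?thesis using nest[OF J PD] P(2) by blast
  qed
  moreover have "arc_set P \<subseteq> arc_set I" using P(1) S(4) by blast
  ultimately show ?thesis using PD sP by blast
qed

lemma child: "J \<in> D \<Longrightarrow> \<exists>J1\<in>D. arc_set J1 \<subseteq> arc_set J \<and> snd J = 2 * snd J1"
proof -
  assume J: "J \<in> D"
  obtain S where S: "S \<subseteq> D" "card S = 2 ^ 1" "\<forall>P\<in>S. snd P = snd J / 2 ^ 1" "arc_set J = (\<Union>P\<in>S. arc_set P)"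
    using subdiv[OF J, of 1] by blast
  have "S \<noteq> {}" using S(2) by (metis card.empty power_not_zero zero_neq_numeral)
  then obtain P where P: "P \<in> S" by blast
  have "arc_set P \<subseteq> arc_set J" using P S(4) by blast
  moreover have "snd J = 2 * snd P" using P S(3) by force
  moreover have "P \<in> D" using P S(1) by blast
  ultimately show ?thesis by blast
qed

lemma Q_mono: assumes "J \<in> D" "K \<in> D" "arc_set J \<subseteq> arc_set K" shows "Qbox J \<subseteq> Qbox K"
proof -
  have "snd J \<le> snd K" using nest_len[OF assms] .
  then show ?thesis unfolding Qbox_pol using assms(3) by (intro pol_mono) auto
qed

lemma T_sub_Q: assumes "J \<in> D" shows "Tbox J \<subseteq> Qbox J"
proof -
  have "0 \<le> snd J / 2" using len[OF assms] by simp
  then show ?thesis unfolding Qbox_pol Tbox_pol by (intro pol_mono) auto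
qed

lemma Q_disj:
  assumes "J \<in> D" "K \<in> D" "\<not> arc_set J \<subseteq> arc_set K" "\<not> arc_set K \<subseteq> arc_set J"
  shows "negligible (Qbox J \<inter> Qbox K)"
proof -
  have "finite (arc_set J \<inter> arc_set K)" using nest[OF assms(1,2)] assms(3,4) by blast
  then have "negligible (rays (arc_set J \<inter> arc_set K) \<union> {0})" by (rule rays_null)
  moreover have "Qbox J \<inter> Qbox K \<subseteq> rays (arc_set J \<inter> arc_set K) \<union> {0}"
    unfolding Qbox_pol by (rule pol_Int)
  ultimately show ?thesis by (rule negligible_subset)
qed

lemma cover_aux:
  fixes l x :: real
  assumes "0 < l" "l / 2 ^ (N+1) \<le> x" "x \<le> l"
  shows "\<exists>k\<le>N. l / 2 ^ (k+1) \<le> x \<and> x \<le> l / 2 ^ k"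
  using assms(2,3)
proof (induction N)
  case 0 then show ?case by auto
next
  case (Suc N)
  show ?case
  proof (cases "l / 2 ^ (N+1) \<le> x")
    case True
    then obtain k where "k \<le> N" "l / 2 ^ (k+1) \<le> x \<and> x \<le> l / 2 ^ k" using Suc.IH Suc.prems by blast
    then show ?thesis by (intro exI[of _ k]) auto
  next
    case False
    then have "x \<le> l / 2 ^ Suc N" by simp
    moreover have "l / 2 ^ (Suc N + 1) \<le> x" using Suc.prems(1) by simp
    ultimately show ?thesis by (intro exI[of _ "Suc N"]) simp
  qed
qed

lemma cover:
  assumes I: "I \<in> D" and z: "z \<in> Qbox I" and zN: "snd I / 2 ^ (N+1) \<le> 1 - norm z"
  shows "\<exists>J\<in>Fam I N. z \<in> Tbox J"
proof -
  obtain r u where ru: "z = complex_of_real r * u" "u \<in> arc_set I" "0 \<le> r" "r < 1" "1 - r \<le> snd I"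
    using z unfolding Qbox_pol pol_def by blast
  have "norm z = r" using ru arc_norm by (simp add: norm_mult)
  then obtain k where k: "k \<le> N" "snd I / 2 ^ (k+1) \<le> 1 - r" "1 - r \<le> snd I / 2 ^ k"
    using cover_aux[of "snd I" N "1 - r"] len[OF I] zN ru by auto
  obtain S where S: "S \<subseteq> D" "card S = 2 ^ k" "\<forall>P\<in>S. snd P = snd I / 2 ^ k" "arc_set I = (\<Union>P\<in>S. arc_set P)"
    using subdiv[OF I, of k] by blast
  obtain P where P: "P \<in> S" "u \<in> arc_set P" using ru(2) S(4) by blast
  have sP: "snd P = snd I / 2 ^ k" using P S(3) by blast
  have "snd P / 2 \<le> 1 - r" using k(2) sP by simp
  moreover have "1 - r \<le> snd P" using k(3) sP by simp
  ultimately have "z \<in> pol P (snd P / 2) (snd P)" unfolding pol_def using ru(1,3,4) P(2) by blast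
  then have "z \<in> Tbox P" by (simp add: Tbox_pol)
  moreover have "P \<in> Fam I N"
  proof -
    have "snd I / 2 ^ N \<le> snd I / 2 ^ k" using k(1) len[OF I]
      by (intro divide_left_mono) (auto intro: power_increasing)
    then show ?thesis unfolding Fam_def using P S by auto
  qed
  ultimately show ?thesis by blast
qed

end

lemma sets_dA[simp]: "sets dA = sets lebesgue" by (simp add: dA_def)
lemma space_dA[simp]: "space dA = UNIV" by (simp add: dA_def)
lemma meas_dA: "borel_measurable dA = borel_measurable lebesgue"
  by (rule measurable_cong_sets) simp_all

lemma null_dA: assumes "negligible N" shows "AE z in dA. z \<notin> N"
proof -
  have "N \<in> null_sets lebesgue" using assms negligible_iff_null_sets by blast
  then have "AE z in lebesgue. z \<notin> N" by (rule AE_not_in)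
  then have "AE z in lebesgue. 0 < ennreal (1/pi) \<longrightarrow> z \<notin> N" by eventually_elim auto
  then show ?thesis unfolding dA_def by (subst AE_density) auto
qed

lemma dA_null_neg: assumes "N \<in> sets lebesgue" "AE z in dA. z \<notin> N" shows "negligible N"
proof -
  have "AE z in lebesgue. z \<notin> N" using assms(2) unfolding dA_def
    by (subst (asm) AE_density) auto
  then have "N \<in> null_sets lebesgue" using AE_iff_null_sets assms(1) by blast
  then show ?thesis using negligible_iff_null_sets by blast
qed

locale setting = grid D for D +
  fixes v w :: "complex \<Rightarrow> real" and c B C :: real
  assumes v_meas: "v \<in> borel_measurable lebesgue"
  and v_loc: "\<And>K. compact K \<Longrightarrow> K \<subseteq> ball 0 1 \<Longrightarrow> set_integrable dA K v"
  and v_pos: "AE z in dA. z \<in> ball 0 1 \<longrightarrow> 0 < v z"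
  and doub: "doubling D v c" and c1: "1 \<le> c"
  and w_meas: "w \<in> borel_measurable lebesgue"
  and avg_fin: "\<And>I. I \<in> D \<Longrightarrow> avg v (Qbox I) (\<lambda>z. ennreal \<bar>w z\<bar>) < top"
  and Bc: "Binf_const D v w \<le> ennreal B" and B1: "1 \<le> B"
  and C1: "1 \<le> C" and apr: "\<And>I z1 z2. I \<in> D \<Longrightarrow> z1 \<in> Tbox I \<Longrightarrow> z2 \<in> Tbox I \<Longrightarrow> \<bar>w z1\<bar> \<le> C * \<bar>w z2\<bar>"
begin

lemma V_meas[measurable]: "(\<lambda>z. ennreal (v z)) \<in> borel_measurable dA"
  using v_meas by (simp add: meas_dA)

lemma w_meas_dA[measurable]: "w \<in> borel_measurable dA"
  using w_meas by (simp add: meas_dA)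

lemma Q_sets[measurable]: "I \<in> D \<Longrightarrow> Qbox I \<in> sets dA"
  using Qbox_sets len by auto

lemma T_sets[measurable]: "I \<in> D \<Longrightarrow> Tbox I \<in> sets dA"
  using Tbox_sets len by auto

lemma vm_T_fin: assumes I: "I \<in> D" shows "vmass v (Tbox I) < top"
proof -
  have "set_integrable dA (Tbox I) v"
    using v_loc Tbox_compact Tbox_sub_ball len[OF I] by auto
  then have intg: "integrable dA (\<lambda>x. indicator (Tbox I) x *\<^sub>R v x)" unfolding set_integrable_def .
  have fin: "(\<integral>\<^sup>+x. norm (indicator (Tbox I) x *\<^sub>R v x) \<partial>dA) < \<infinity>"
    using integrable_iff_bounded[THEN iffD1, OF intg] by (rule conjunct2)
  have "vmass v (Tbox I) \<le> (\<integral>\<^sup>+x. norm (indicator (Tbox I) x *\<^sub>R v x) \<partial>dA)"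
    unfolding vmass_def by (intro nn_integral_mono) (auto simp: indicator_def ennreal_leI)
  then show ?thesis using fin by (simp add: top_unique less_le_trans)
qed

lemma doub1: assumes "I \<in> D" "J \<in> D" "arc_set I \<subseteq> arc_set J" "snd J = 2 * snd I"
  shows "vmass v (Qbox J) \<le> ennreal c * vmass v (Qbox I)"
proof -
  have h: "ennreal (1/c) * vmass v (Qbox J) \<le> vmass v (Qbox I)"
    using doub assms unfolding doubling_def arc_len_def by blast
  have "vmass v (Qbox J) = ennreal c * (ennreal (1/c) * vmass v (Qbox J))"
    using c1 by (simp add: mult.assoc[symmetric] ennreal_mult[symmetric])
  also have "\<dots> \<le> ennreal c * vmass v (Qbox I)" using h by (intro mult_left_mono) auto
  finally show ?thesis .
qed

lemma doub2: assumes "I \<in> D" "J \<in> D" "arc_set I \<subseteq> arc_set J" "snd J = 2 * snd I"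
  shows "vmass v (Qbox I) \<le> ennreal c * vmass v (Tbox I)"
  using doub assms unfolding doubling_def arc_len_def by blast

lemma vm_Q_fin: assumes J: "J \<in> D" shows "vmass v (Qbox J) < top"
proof -
  obtain J1 where J1: "J1 \<in> D" "arc_set J1 \<subseteq> arc_set J" "snd J = 2 * snd J1" using child[OF J] by blast
  have "vmass v (Qbox J) \<le> ennreal c * vmass v (Qbox J1)" using doub1[OF J1(1) J J1(2,3)] .
  also have "\<dots> \<le> ennreal c * (ennreal c * vmass v (Tbox J1))"
    using doub2[OF J1(1) J J1(2,3)] by (intro mult_left_mono) auto
  also have "\<dots> < top"
  proof -
    have "ennreal c * vmass v (Tbox J1) < top" using vm_T_fin[OF J1(1)] ennreal_mult_less_top by auto
    then show ?thesis using ennreal_mult_less_top by auto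
  qed
  finally show ?thesis .
qed

lemma vm_T_pos: assumes I: "I \<in> D" shows "0 < vmass v (Tbox I)"
proof (rule ccontr)
  assume "\<not> 0 < vmass v (Tbox I)"
  then have "vmass v (Tbox I) = 0" by (simp add: not_gr_zero)
  then have "AE z in dA. ennreal (v z) * indicator (Tbox I) z = 0"
    unfolding vmass_def using I by (subst (asm) nn_integral_0_iff_AE) auto
  then have "AE z in dA. z \<notin> Tbox I" using v_pos
  proof eventually_elim
    case (elim z)
    then show ?case using Tbox_sub_ball[of I] by (auto simp: indicator_def)
  qed
  then have "negligible (Tbox I)" using Tbox_sets len[OF I] by (intro dA_null_neg) auto
  then show False using pol_not_negligible[of I "snd I / 2" "snd I"] len[OF I] by (auto simp: Tbox_pol)
qed

lemma vm_mono: "X \<subseteq> Y \<Longrightarrow> vmass v X \<le> vmass v Y"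
  unfolding vmass_def by (intro nn_integral_mono) (auto simp: indicator_def)

lemma vm_Q_pos: "I \<in> D \<Longrightarrow> 0 < vmass v (Qbox I)"
  using vm_T_pos vm_mono T_sub_Q by (meson less_le_trans)

end

lemma ennreal_div_le_mult:
  fixes p q :: ennreal
  assumes "p / q \<le> ennreal b" "q < top"
  shows "p \<le> ennreal b * q"
proof (cases "q = 0")
  case True
  then have "p = 0" using assms(1) by (auto simp: top_unique split: if_splits)
  then show ?thesis by simp
next
  case False
  have "p = (p / q) * q" using False assms(2) by (simp add: ennreal_divide_times)
  also have "\<dots> \<le> ennreal b * q" using assms(1) by (intro mult_right_mono) auto
  finally show ?thesis .
qed

context setting
begin

definition wmass :: "complex set \<Rightarrow> ennreal" where
  "wmass E = (\<integral>\<^sup>+ z\<in>E. ennreal \<bar>w z\<bar> * ennreal (v z) \<partial>dA)"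

definition aa :: "arc \<Rightarrow> real" where
  "aa J = enn2real (avg v (Qbox J) (\<lambda>z. ennreal \<bar>w z\<bar>))"

lemma aa_nonneg[simp]: "0 \<le> aa J" by (simp add: aa_def)

lemma avg_eq: "J \<in> D \<Longrightarrow> avg v (Qbox J) (\<lambda>z. ennreal \<bar>w z\<bar>) = ennreal (aa J)"
  unfolding aa_def using avg_fin by simp

lemma avg_wm: "avg v E (\<lambda>z. ennreal \<bar>w z\<bar>) = wmass E / vmass v E"
  unfolding avg_def wmass_def vmass_def ..

lemma wm_eq: assumes J: "J \<in> D" shows "wmass (Qbox J) = ennreal (aa J) * vmass v (Qbox J)"
proof -
  have m: "vmass v (Qbox J) \<noteq> 0" "vmass v (Qbox J) < top" using vm_Q_pos[OF J] vm_Q_fin[OF J] by auto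
  have "ennreal (aa J) * vmass v (Qbox J) = (wmass (Qbox J) / vmass v (Qbox J)) * vmass v (Qbox J)"
    using avg_eq[OF J] avg_wm by simp
  also have "\<dots> = wmass (Qbox J)" using m by (simp add: ennreal_divide_times)
  finally show ?thesis by simp
qed

lemma wm_mono: "X \<subseteq> Y \<Longrightarrow> wmass X \<le> wmass Y"
  unfolding wmass_def by (intro nn_integral_mono) (auto simp: indicator_def)

abbreviation Mx :: "arc \<Rightarrow> complex \<Rightarrow> ennreal" where
  "Mx J \<equiv> dyadic_max D v (\<lambda>z. ennreal \<bar>w z\<bar> * indicator (Qbox J) z)"

lemma Binf_bound:
  assumes J: "J \<in> D"
  shows "(\<integral>\<^sup>+ z\<in>Qbox J. Mx J z * ennreal (v z) \<partial>dA) \<le> ennreal B * wmass (Qbox J)"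
proof -
  define X where "X = (\<integral>\<^sup>+ z\<in>Qbox J. Mx J z * ennreal (v z) \<partial>dA)"
  define m where "m = vmass v (Qbox J)"
  have m: "m \<noteq> 0" "m < top" using vm_Q_pos[OF J] vm_Q_fin[OF J] by (auto simp: m_def)
  have "avg v (Qbox J) (Mx J) / avg v (Qbox J) (\<lambda>z. ennreal \<bar>w z\<bar>) \<le> Binf_const D v w"
    unfolding Binf_const_def using J by (rule SUP_upper)
  also have "\<dots> \<le> ennreal B" by (rule Bc)
  finally have "(X / m) / ennreal (aa J) \<le> ennreal B"
    using avg_eq[OF J] unfolding avg_def X_def m_def by simp
  then have "X / m \<le> ennreal B * ennreal (aa J)" by (rule ennreal_div_le_mult) simp
  then have "(X / m) * m \<le> ennreal B * ennreal (aa J) * m" by (rule mult_right_mono) simp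
  moreover have "(X / m) * m = X" using m by (simp add: ennreal_divide_times)
  ultimately have "X \<le> ennreal B * (ennreal (aa J) * m)" by (simp add: mult.assoc)
  then show ?thesis using wm_eq[OF J] by (simp add: X_def m_def)
qed

lemma MAXLE:
  assumes J: "J \<in> D" and K: "K \<in> D" and sub: "arc_set K \<subseteq> arc_set J" and z: "z \<in> Qbox K"
  shows "ennreal (aa K) \<le> Mx J z"
proof -
  have QQ: "Qbox K \<subseteq> Qbox J" using Q_mono[OF K J sub] .
  have "avg v (Qbox K) (\<lambda>z. ennreal \<bar>w z\<bar> * indicator (Qbox J) z) = avg v (Qbox K) (\<lambda>z. ennreal \<bar>w z\<bar>)"
    unfolding avg_def
    by (rule arg_cong[where f="\<lambda>x. x / vmass v (Qbox K)"], rule nn_integral_cong) (use QQ in \<open>auto simp: indicator_def\<close>)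
  also have "\<dots> = ennreal (aa K)" using avg_eq[OF K] .
  finally have "ennreal (aa K) = avg v (Qbox K) (\<lambda>z. ennreal \<bar>w z\<bar> * indicator (Qbox J) z)" by simp
  also have "\<dots> \<le> Mx J z" unfolding dyadic_max_def using K z by (intro SUP_upper) auto
  finally show ?thesis .
qed

lemma ptwise:
  assumes J: "J \<in> D" and z: "z \<in> Tbox J"
  shows "\<bar>w z\<bar> \<le> C^2 * c^2 * aa J"
proof -
  obtain J1 where J1: "J1 \<in> D" "arc_set J1 \<subseteq> arc_set J" "snd J = 2 * snd J1" using child[OF J] by blast
  define u1 where "u1 = cis (2 * pi * fst J1)"
  define zs where "zs = complex_of_real (1 - snd J / 2) * u1"
  have u1: "u1 \<in> arc_set J1" unfolding u1_def arc_set_def using len[OF J1(1)] by force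
  have lJ: "0 < snd J" "snd J \<le> 1" using len[OF J] by auto
  have u1J: "u1 \<in> arc_set J" using u1 J1(2) by blast
  have "\<exists>r u. zs = complex_of_real r * u \<and> u \<in> arc_set J \<and> 0 \<le> r \<and> r < 1 \<and> snd J / 2 \<le> 1 - r \<and> 1 - r \<le> snd J"
    using u1J lJ by (intro exI[of _ "1 - snd J / 2"] exI[of _ u1]) (auto simp: zs_def)
  then have zsJ: "zs \<in> Tbox J" unfolding Tbox_pol pol_def by blast
  have "\<exists>r u. zs = complex_of_real r * u \<and> u \<in> arc_set J1 \<and> 0 \<le> r \<and> r < 1 \<and> snd J1 / 2 \<le> 1 - r \<and> 1 - r \<le> snd J1"
    using u1 lJ J1(3) by (intro exI[of _ "1 - snd J / 2"] exI[of _ u1]) (auto simp: zs_def)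
  then have zsJ1: "zs \<in> Tbox J1" unfolding Tbox_pol pol_def by blast
  have bd: "\<bar>w z\<bar> \<le> C^2 * \<bar>w z2\<bar>" if "z2 \<in> Tbox J1" for z2
  proof -
    have "\<bar>w z\<bar> \<le> C * \<bar>w zs\<bar>" using apr[OF J z zsJ] .
    also have "\<dots> \<le> C * (C * \<bar>w z2\<bar>)" using apr[OF J1(1) zsJ1 that] C1 by (intro mult_left_mono) auto
    finally show ?thesis by (simp add: power2_eq_square mult.assoc)
  qed
  have "ennreal \<bar>w z\<bar> * vmass v (Tbox J1) = (\<integral>\<^sup>+ x. ennreal \<bar>w z\<bar> * (ennreal (v x) * indicator (Tbox J1) x) \<partial>dA)"
    unfolding vmass_def using J1(1) by (subst nn_integral_cmult) auto
  also have "\<dots> \<le> (\<integral>\<^sup>+ x. ennreal (C^2) * (ennreal \<bar>w x\<bar> * ennreal (v x) * indicator (Tbox J1) x) \<partial>dA)"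
  proof (intro nn_integral_mono)
    fix x
    show "ennreal \<bar>w z\<bar> * (ennreal (v x) * indicator (Tbox J1) x) \<le> ennreal (C^2) * (ennreal \<bar>w x\<bar> * ennreal (v x) * indicator (Tbox J1) x)"
    proof (cases "x \<in> Tbox J1")
      case True
      have "ennreal \<bar>w z\<bar> \<le> ennreal (C^2) * ennreal \<bar>w x\<bar>"
        using bd[OF True] by (simp add: ennreal_mult[symmetric])
      then have "ennreal \<bar>w z\<bar> * ennreal (v x) \<le> ennreal (C^2) * ennreal \<bar>w x\<bar> * ennreal (v x)"
        by (rule mult_right_mono) simp
      then show ?thesis using True by (simp add: mult.assoc)
    qed simp
  qed
  also have "\<dots> = ennreal (C^2) * wmass (Tbox J1)"
    unfolding wmass_def using J1(1) by (subst nn_integral_cmult) (auto simp: mult.assoc)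
  also have "\<dots> \<le> ennreal (C^2) * wmass (Qbox J)"
    using wm_mono[OF order_trans[OF T_sub_Q[OF J1(1)] Q_mono[OF J1(1) J J1(2)]]] by (intro mult_left_mono) auto
  finally have A: "ennreal \<bar>w z\<bar> * vmass v (Tbox J1) \<le> ennreal (C^2) * wmass (Qbox J)" .
  have Bq: "vmass v (Qbox J) \<le> ennreal c * (ennreal c * vmass v (Tbox J1))"
    using doub1[OF J1(1) J J1(2,3)] doub2[OF J1(1) J J1(2,3)]
    by (meson order_trans mult_left_mono zero_le)
  have "vmass v (Qbox J) * ennreal \<bar>w z\<bar> \<le> ennreal c * (ennreal c * vmass v (Tbox J1)) * ennreal \<bar>w z\<bar>"
    using Bq by (rule mult_right_mono) simp
  also have "\<dots> = ennreal (c^2) * (ennreal \<bar>w z\<bar> * vmass v (Tbox J1))"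
    using c1 by (simp add: power2_eq_square ennreal_mult mult_ac)
  also have "\<dots> \<le> ennreal (c^2) * (ennreal (C^2) * wmass (Qbox J))" using A by (rule mult_left_mono) simp
  also have "\<dots> = vmass v (Qbox J) * ennreal (C^2 * c^2 * aa J)"
    using wm_eq[OF J] c1 C1 by (simp add: ennreal_mult mult_ac)
  finally have "vmass v (Qbox J) * ennreal \<bar>w z\<bar> \<le> vmass v (Qbox J) * ennreal (C^2 * c^2 * aa J)" .
  then have "ennreal \<bar>w z\<bar> \<le> ennreal (C^2 * c^2 * aa J)"
    using vm_Q_pos[OF J] vm_Q_fin[OF J] by (subst (asm) ennreal_mult_le_mult_iff) auto
  then show ?thesis by (subst (asm) ennreal_le_iff) auto
qed

end

lemma sum_indicator_disj:
  fixes A :: "'i \<Rightarrow> 'a set"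
  assumes "finite S" "\<And>J J'. J \<in> S \<Longrightarrow> J' \<in> S \<Longrightarrow> J \<noteq> J' \<Longrightarrow> \<not> (z \<in> A J \<and> z \<in> A J')"
  shows "(\<Sum>J\<in>S. indicator (A J) z :: ennreal) = indicator (\<Union>J\<in>S. A J) z"
proof (cases "\<exists>J0\<in>S. z \<in> A J0")
  case True
  then obtain J0 where J0: "J0 \<in> S" "z \<in> A J0" by blast
  have "(\<Sum>J\<in>S. indicator (A J) z :: ennreal) = (\<Sum>J\<in>S. if J = J0 then 1 else 0)"
    using assms(2) J0 by (intro sum.cong) (auto simp: indicator_def)
  also have "\<dots> = 1" using J0(1) assms(1) by simp
  moreover have "z \<in> (\<Union>J\<in>S. A J)" using J0 by blast
  ultimately show ?thesis by simp
next
  case False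
  then show ?thesis by (simp add: indicator_def)
qed

locale fixed = setting D v w c B C for D v w c B C +
  fixes I0 :: arc and N :: nat
  assumes I0: "I0 \<in> D"
begin

abbreviation "FF \<equiv> Fam I0 N"

lemma FF_fin: "finite FF" using Fam_finite[OF I0] .
lemma I0_FF: "I0 \<in> FF" using I0 len[OF I0] unfolding Fam_def
  by (auto intro: divide_left_mono simp: divide_le_eq)
lemma FF_D: "J \<in> FF \<Longrightarrow> J \<in> D" unfolding Fam_def by simp
lemma FF_sub: "J \<in> FF \<Longrightarrow> arc_set J \<subseteq> arc_set I0" unfolding Fam_def by simp
lemma FF_len: "J \<in> FF \<Longrightarrow> snd I0 / 2 ^ N \<le> snd J" unfolding Fam_def by simp
lemma FF_Q: "J \<in> FF \<Longrightarrow> Qbox J \<subseteq> Qbox I0" using Q_mono[OF FF_D I0 FF_sub] .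

definition ff :: "complex \<Rightarrow> real" where
  "ff z = Max ((\<lambda>J. aa J * indicator (Qbox J) z) ` FF)"

lemma ff_ge: "J \<in> FF \<Longrightarrow> z \<in> Qbox J \<Longrightarrow> aa J \<le> ff z"
  unfolding ff_def using FF_fin by (intro Max_ge_iff[THEN iffD2]) (auto intro!: bexI[of _ J])

lemma ff_attain: "\<exists>J\<in>FF. ff z = aa J * indicator (Qbox J) z"
proof -
  have "ff z \<in> (\<lambda>J. aa J * indicator (Qbox J) z) ` FF"
    unfolding ff_def using FF_fin I0_FF by (intro Max_in) auto
  then show ?thesis by blast
qed

lemma ff_nonneg: "0 \<le> ff z"
  using ff_attain[of z] by (auto simp: indicator_def)

lemma ff_meas[measurable]: "ff \<in> borel_measurable dA"
  unfolding ff_def using FF_fin by (intro borel_measurable_Max) (auto dest: FF_D)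

definition Amax :: real where "Amax = Max (aa ` FF)"

lemma ff_le_Amax: "ff z \<le> Amax"
proof -
  obtain J where J: "J \<in> FF" "ff z = aa J * indicator (Qbox J) z" using ff_attain by blast
  have "aa J \<le> Amax" unfolding Amax_def using J(1) FF_fin by (intro Max_ge) auto
  moreover have "0 \<le> Amax" using \<open>aa J \<le> Amax\<close> aa_nonneg[of J] by linarith
  ultimately show ?thesis using J(2) by (auto simp: indicator_def)
qed

lemma ff_gt: assumes "0 \<le> l" "l < ff z" shows "\<exists>J\<in>FF. z \<in> Qbox J \<and> l < aa J"
proof -
  obtain J where J: "J \<in> FF" "ff z = aa J * indicator (Qbox J) z" using ff_attain by blast
  show ?thesis
  proof (cases "z \<in> Qbox J")
    case True then show ?thesis using J assms by auto
  next
    case False then show ?thesis using J assms by auto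
  qed
qed

lemma ff_M0: assumes "z \<in> Qbox I0" shows "ennreal (ff z) \<le> Mx I0 z"
proof -
  obtain J where J: "J \<in> FF" "ff z = aa J * indicator (Qbox J) z" using ff_attain by blast
  show ?thesis
  proof (cases "z \<in> Qbox J")
    case True
    then show ?thesis using J MAXLE[OF I0 FF_D[OF J(1)] FF_sub[OF J(1)] True] by simp
  next
    case False
    then show ?thesis using J by simp
  qed
qed

lemma int_ff_Q0: "(\<integral>\<^sup>+ z\<in>Qbox I0. ennreal (ff z) * ennreal (v z) \<partial>dA) \<le> ennreal B * wmass (Qbox I0)"
proof -
  have "(\<integral>\<^sup>+ z\<in>Qbox I0. ennreal (ff z) * ennreal (v z) \<partial>dA) \<le> (\<integral>\<^sup>+ z\<in>Qbox I0. Mx I0 z * ennreal (v z) \<partial>dA)"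
  proof (intro nn_integral_mono)
    fix z
    show "ennreal (ff z) * ennreal (v z) * indicator (Qbox I0) z \<le> Mx I0 z * ennreal (v z) * indicator (Qbox I0) z"
    proof (cases "z \<in> Qbox I0")
      case True
      have "ennreal (ff z) * ennreal (v z) \<le> Mx I0 z * ennreal (v z)"
        using ff_M0[OF True] by (rule mult_right_mono) simp
      then show ?thesis using True by simp
    qed simp
  qed
  also have "\<dots> \<le> ennreal B * wmass (Qbox I0)" by (rule Binf_bound[OF I0])
  finally show ?thesis .
qed

definition GG :: "real \<Rightarrow> arc set" where "GG l = {J\<in>FF. l < aa J}"
definition MM :: "real \<Rightarrow> arc set" where
  "MM l = {J\<in>GG l. \<forall>K\<in>GG l. arc_set J \<subseteq> arc_set K \<longrightarrow> K = J}"

lemma GG_fin: "finite (GG l)" unfolding GG_def using FF_fin by simp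
lemma MM_fin: "finite (MM l)" unfolding MM_def using GG_fin by simp
lemma MM_GG: "J \<in> MM l \<Longrightarrow> J \<in> GG l" unfolding MM_def by simp
lemma GG_FF: "J \<in> GG l \<Longrightarrow> J \<in> FF" unfolding GG_def by simp

lemma MM_exists:
  assumes J: "J \<in> GG l" shows "\<exists>M\<in>MM l. arc_set J \<subseteq> arc_set M"
proof -
  define S where "S = {K\<in>GG l. arc_set J \<subseteq> arc_set K}"
  have Sfin: "finite S" unfolding S_def using GG_fin by simp
  have JS: "J \<in> S" unfolding S_def using J by simp
  have "Max (snd ` S) \<in> snd ` S" using Sfin JS by (intro Max_in) auto
  then obtain M where M: "M \<in> S" "snd M = Max (snd ` S)" by auto
  have "M \<in> MM l"
    unfolding MM_def
  proof (intro CollectI conjI ballI impI)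
    show "M \<in> GG l" using M(1) unfolding S_def by simp
    fix K assume K: "K \<in> GG l" "arc_set M \<subseteq> arc_set K"
    have KS: "K \<in> S" using K M(1) unfolding S_def by auto
    have MD: "M \<in> D" and KD: "K \<in> D" using M(1) K(1) unfolding S_def by (auto dest: GG_FF FF_D)
    have "snd K \<le> snd M" using M(2) Sfin KS by simp
    moreover have "snd M \<le> snd K" using nest_len[OF MD KD K(2)] .
    ultimately have eq: "snd K = snd M" by simp
    have pos: "0 < snd M" using len[OF MD] by simp
    have h1: "snd M / 2 < snd K" and h2: "snd K / 2 < snd M" using pos eq by simp_all
    show "K = M" using ovl2[OF MD KD K(2) h1 h2] by (rule sym)
  qed
  then show ?thesis using M(1) unfolding S_def by blast
qed

lemma MM_disj:
  assumes "M1 \<in> MM l" "M2 \<in> MM l" "M1 \<noteq> M2"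
  shows "negligible (Qbox M1 \<inter> Qbox M2)"
proof (rule Q_disj)
  show D1: "M1 \<in> D" and D2: "M2 \<in> D" using assms by (auto dest!: MM_GG GG_FF FF_D)
  show "\<not> arc_set M1 \<subseteq> arc_set M2" using assms unfolding MM_def by auto
  show "\<not> arc_set M2 \<subseteq> arc_set M1" using assms unfolding MM_def by auto
qed

definition Om :: "real \<Rightarrow> complex set" where "Om l = {z \<in> Qbox I0. l < ff z}"

lemma Om_eq: assumes "0 \<le> l" shows "Om l = (\<Union>J\<in>MM l. Qbox J)"
proof (rule set_eqI, rule iffI)
  fix z assume "z \<in> Om l"
  then have z: "z \<in> Qbox I0" "l < ff z" unfolding Om_def by auto
  obtain J where J: "J \<in> FF" "z \<in> Qbox J" "l < aa J" using ff_gt[OF assms z(2)] by blast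
  then have "J \<in> GG l" unfolding GG_def by simp
  then obtain M where M: "M \<in> MM l" "arc_set J \<subseteq> arc_set M" using MM_exists by blast
  have "z \<in> Qbox M" using J(2) Q_mono[OF FF_D[OF J(1)] _ M(2)] M(1) by (auto dest!: MM_GG GG_FF FF_D)
  then show "z \<in> (\<Union>J\<in>MM l. Qbox J)" using M(1) by blast
next
  fix z assume "z \<in> (\<Union>J\<in>MM l. Qbox J)"
  then obtain J where J: "J \<in> MM l" "z \<in> Qbox J" by blast
  have JF: "J \<in> FF" using J(1) by (auto dest!: MM_GG GG_FF)
  have "l < aa J" using J(1) unfolding MM_def GG_def by simp
  also have "\<dots> \<le> ff z" using ff_ge[OF JF J(2)] .
  finally show "z \<in> Om l" unfolding Om_def using FF_Q[OF JF] J(2) by auto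
qed

lemma Om_sets[measurable]: "Om l \<in> sets dA"
proof -
  have "Om l = {z\<in>space dA. l < ff z} \<inter> Qbox I0" unfolding Om_def by auto
  also have "\<dots> \<in> sets dA" using I0 by measurable
  finally show ?thesis .
qed

end

context fixed
begin

lemma L4:
  assumes l: "aa I0 \<le> l" and J: "J \<in> MM l"
  shows "wmass (Qbox J) \<le> ennreal (c * l) * vmass v (Qbox J)"
proof -
  have JG: "J \<in> GG l" using J by (rule MM_GG)
  have JF: "J \<in> FF" using JG by (rule GG_FF)
  have JD: "J \<in> D" using JF by (rule FF_D)
  have lJ: "l < aa J" using JG unfolding GG_def by simp
  have l0: "0 \<le> l" using l aa_nonneg[of I0] by linarith
  have "J \<noteq> I0" using lJ l by auto
  then obtain P where P: "P \<in> D" "arc_set P \<subseteq> arc_set I0" "arc_set J \<subseteq> arc_set P" "snd P = 2 * snd J"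
    using parent[OF I0 JD FF_sub[OF JF]] by blast
  have sJ: "0 < snd J" using len[OF JD] by simp
  have PF: "P \<in> FF" unfolding Fam_def using P FF_len[OF JF] sJ by auto
  have "P \<notin> GG l"
  proof
    assume "P \<in> GG l"
    then have "P = J" using J P(3) unfolding MM_def by blast
    then show False using P(4) sJ by simp
  qed
  then have aP: "aa P \<le> l" using PF unfolding GG_def by simp
  have "wmass (Qbox J) \<le> wmass (Qbox P)" using wm_mono[OF Q_mono[OF JD P(1) P(3)]] .
  also have "\<dots> = ennreal (aa P) * vmass v (Qbox P)" using wm_eq[OF P(1)] .
  also have "\<dots> \<le> ennreal l * (ennreal c * vmass v (Qbox J))"
    using ennreal_leI[OF aP] doub1[OF JD P(1) P(3,4)] by (intro mult_mono) auto
  also have "\<dots> = ennreal (c * l) * vmass v (Qbox J)"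
    using l0 c1 by (simp add: ennreal_mult mult_ac)
  finally show ?thesis .
qed

lemma L5:
  assumes l: "aa I0 \<le> l" and J: "J \<in> MM l"
  shows "AE z in dA. z \<in> Qbox J \<longrightarrow> ennreal (ff z) \<le> Mx J z"
proof -
  have JG: "J \<in> GG l" using J by (rule MM_GG)
  have JF: "J \<in> FF" using JG by (rule GG_FF)
  have JD: "J \<in> D" using JF by (rule FF_D)
  have lJ: "l < aa J" using JG unfolding GG_def by simp
  define NS where "NS = {K\<in>FF. \<not> arc_set K \<subseteq> arc_set J \<and> \<not> arc_set J \<subseteq> arc_set K}"
  have "negligible (\<Union>K\<in>NS. Qbox J \<inter> Qbox K)"
  proof (intro negligible_Union)
    show "finite ((\<lambda>K. Qbox J \<inter> Qbox K) ` NS)" unfolding NS_def using FF_fin by simp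
    fix T assume "T \<in> (\<lambda>K. Qbox J \<inter> Qbox K) ` NS"
    then obtain K where K: "K \<in> NS" "T = Qbox J \<inter> Qbox K" by blast
    show "negligible T" using K Q_disj[OF JD FF_D] unfolding NS_def by auto
  qed
  then have "AE z in dA. z \<notin> (\<Union>K\<in>NS. Qbox J \<inter> Qbox K)" by (rule null_dA)
  then show ?thesis
  proof eventually_elim
    case (elim z)
    show ?case
    proof
      assume zJ: "z \<in> Qbox J"
      have JJ: "ennreal (aa J) \<le> Mx J z" using MAXLE[OF JD JD order_refl zJ] .
      obtain K where K: "K \<in> FF" "ff z = aa K * indicator (Qbox K) z" using ff_attain by blast
      show "ennreal (ff z) \<le> Mx J z"
      proof (cases "z \<in> Qbox K")
        case False then show ?thesis using K by simp
      next
        case True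
        have KD: "K \<in> D" using K(1) by (rule FF_D)
        have ffK: "ff z = aa K" using K True by simp
        have "arc_set K \<subseteq> arc_set J \<or> arc_set J \<subseteq> arc_set K"
          using elim zJ True K(1) unfolding NS_def by blast
        then show ?thesis
        proof
          assume "arc_set K \<subseteq> arc_set J"
          then show ?thesis using MAXLE[OF JD KD _ True] ffK by simp
        next
          assume sub: "arc_set J \<subseteq> arc_set K"
          show ?thesis
          proof (cases "K = J")
            case True then show ?thesis using JJ ffK by simp
          next
            case False
            then have "K \<notin> GG l" using J sub unfolding MM_def by blast
            then have "aa K \<le> l" using K(1) unfolding GG_def by simp
            then have "ff z \<le> aa J" using ffK lJ by simp
            then have "ennreal (ff z) \<le> ennreal (aa J)" by (rule ennreal_leI)
            then show ?thesis using JJ by (rule order_trans)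
          qed
        qed
      qed
    qed
  qed
qed

lemma L6:
  assumes l: "aa I0 \<le> l"
  shows "(\<integral>\<^sup>+ z\<in>Om l. ennreal (ff z) * ennreal (v z) \<partial>dA) \<le> ennreal (B * c * l) * vmass v (Om l)"
proof -
  define S where "S = MM l"
  have Sfin: "finite S" unfolding S_def by (rule MM_fin)
  have SD: "J \<in> S \<Longrightarrow> J \<in> D" for J unfolding S_def by (auto dest!: MM_GG GG_FF FF_D)
  have l0: "0 \<le> l" using l aa_nonneg[of I0] by linarith
  have Om: "Om l = (\<Union>J\<in>S. Qbox J)" unfolding S_def by (rule Om_eq[OF l0])
  have "(\<integral>\<^sup>+ z\<in>Om l. ennreal (ff z) * ennreal (v z) \<partial>dA) \<le>
        (\<integral>\<^sup>+ z. (\<Sum>J\<in>S. ennreal (ff z) * ennreal (v z) * indicator (Qbox J) z) \<partial>dA)"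
  proof (intro nn_integral_mono)
    fix z
    show "ennreal (ff z) * ennreal (v z) * indicator (Om l) z \<le> (\<Sum>J\<in>S. ennreal (ff z) * ennreal (v z) * indicator (Qbox J) z)"
    proof (cases "z \<in> Om l")
      case True
      then obtain J0 where J0: "J0 \<in> S" "z \<in> Qbox J0" using Om by blast
      have "ennreal (ff z) * ennreal (v z) * indicator (Om l) z = ennreal (ff z) * ennreal (v z) * indicator (Qbox J0) z"
        using True J0 by simp
      also have "\<dots> \<le> (\<Sum>J\<in>S. ennreal (ff z) * ennreal (v z) * indicator (Qbox J) z)"
        using J0(1) Sfin by (intro member_le_sum) auto
      finally show ?thesis .
    qed simp
  qed
  also have "\<dots> = (\<Sum>J\<in>S. \<integral>\<^sup>+ z\<in>Qbox J. ennreal (ff z) * ennreal (v z) \<partial>dA)"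
    by (intro nn_integral_sum) (auto dest: SD)
  also have "\<dots> \<le> (\<Sum>J\<in>S. ennreal B * (ennreal (c * l) * vmass v (Qbox J)))"
  proof (intro sum_mono)
    fix J assume JS: "J \<in> S"
    have JM: "J \<in> MM l" using JS unfolding S_def .
    have "(\<integral>\<^sup>+ z\<in>Qbox J. ennreal (ff z) * ennreal (v z) \<partial>dA) \<le> (\<integral>\<^sup>+ z\<in>Qbox J. Mx J z * ennreal (v z) \<partial>dA)"
    proof (intro nn_integral_mono_AE)
      show "AE z in dA. ennreal (ff z) * ennreal (v z) * indicator (Qbox J) z \<le> Mx J z * ennreal (v z) * indicator (Qbox J) z"
        using L5[OF l JM]
      proof eventually_elim
        case (elim z)
        show ?case
        proof (cases "z \<in> Qbox J")
          case True
          then have "ennreal (ff z) * ennreal (v z) \<le> Mx J z * ennreal (v z)"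
            using elim by (intro mult_right_mono) auto
          then show ?thesis using True by simp
        qed simp
      qed
    qed
    also have "\<dots> \<le> ennreal B * wmass (Qbox J)" using Binf_bound[OF SD[OF JS]] .
    also have "\<dots> \<le> ennreal B * (ennreal (c * l) * vmass v (Qbox J))"
      using L4[OF l JM] by (intro mult_left_mono) auto
    finally show "(\<integral>\<^sup>+ z\<in>Qbox J. ennreal (ff z) * ennreal (v z) \<partial>dA) \<le> ennreal B * (ennreal (c * l) * vmass v (Qbox J))" .
  qed
  also have "\<dots> = ennreal (B * c * l) * (\<Sum>J\<in>S. vmass v (Qbox J))"
    using B1 c1 l0 by (simp add: sum_distrib_left ennreal_mult mult_ac)
  also have "(\<Sum>J\<in>S. vmass v (Qbox J)) = vmass v (Om l)"
  proof -
    define P where "P = (\<Union>J\<in>S. \<Union>J'\<in>S - {J}. Qbox J \<inter> Qbox J')"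
    have "negligible P" unfolding P_def
    proof (intro negligible_Union)
      show "finite ((\<lambda>J. \<Union>J'\<in>S - {J}. Qbox J \<inter> Qbox J') ` S)" using Sfin by simp
      fix T assume "T \<in> (\<lambda>J. \<Union>J'\<in>S - {J}. Qbox J \<inter> Qbox J') ` S"
      then obtain J where J: "J \<in> S" "T = (\<Union>J'\<in>S - {J}. Qbox J \<inter> Qbox J')" by blast
      show "negligible T" unfolding J(2)
      proof (intro negligible_Union)
        show "finite ((\<lambda>J'. Qbox J \<inter> Qbox J') ` (S - {J}))" using Sfin by simp
        fix T' assume "T' \<in> (\<lambda>J'. Qbox J \<inter> Qbox J') ` (S - {J})"
        then obtain J' where J': "J' \<in> S - {J}" "T' = Qbox J \<inter> Qbox J'" by blast
        have "J \<noteq> J'" using J' by auto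
        then show "negligible T'" using MM_disj[of J l J'] J(1) J' unfolding S_def by auto
      qed
    qed
    then have ae: "AE z in dA. z \<notin> P" by (rule null_dA)
    have "(\<Sum>J\<in>S. vmass v (Qbox J)) = (\<integral>\<^sup>+ z. (\<Sum>J\<in>S. ennreal (v z) * indicator (Qbox J) z) \<partial>dA)"
      unfolding vmass_def by (intro nn_integral_sum[symmetric]) (auto dest: SD)
    also have "\<dots> = (\<integral>\<^sup>+ z. ennreal (v z) * indicator (Om l) z \<partial>dA)"
    proof (intro nn_integral_cong_AE)
      show "AE z in dA. (\<Sum>J\<in>S. ennreal (v z) * indicator (Qbox J) z) = ennreal (v z) * indicator (Om l) z"
        using ae
      proof eventually_elim
        case (elim z)
        have "(\<Sum>J\<in>S. indicator (Qbox J) z :: ennreal) = indicator (\<Union>J\<in>S. Qbox J) z"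
        proof (rule sum_indicator_disj[OF Sfin])
          fix J J' assume JJ: "J \<in> S" "J' \<in> S" "J \<noteq> J'"
          show "\<not> (z \<in> Qbox J \<and> z \<in> Qbox J')"
          proof
            assume "z \<in> Qbox J \<and> z \<in> Qbox J'"
            then have "z \<in> P" unfolding P_def using JJ by blast
            then show False using elim by simp
          qed
        qed
        then show ?case using Om by (simp add: sum_distrib_left[symmetric])
      qed
    qed
    finally show ?thesis unfolding vmass_def .
  qed
  finally show ?thesis .
qed

end

lemma pow2_powr: "(2 powr e) ^ k = ((2::real) ^ k) powr e"
proof -
  have "(2 powr e) ^ k = (2::real) powr (real k * e)" by (simp add: powr_power)
  also have "\<dots> = (2 powr real k) powr e" by (simp add: powr_powr)
  also have "\<dots> = (2 ^ k) powr e" by (simp add: powr_realpow)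
  finally show ?thesis .
qed

lemma geo_le2: fixes x :: real assumes "2 \<le> x" shows "(\<Sum>k<Suc m. x ^ k) \<le> 2 * x ^ m"
proof (induction m)
  case 0 then show ?case by simp
next
  case (Suc m)
  have "(\<Sum>k<Suc (Suc m). x ^ k) = (\<Sum>k<Suc m. x ^ k) + x ^ Suc m" by simp
  also have "\<dots> \<le> 2 * x ^ m + x ^ Suc m" using Suc.IH by simp
  also have "2 * x ^ m \<le> x ^ Suc m" using assms by (simp add: mult_right_mono)
  finally show ?case by simp
qed

lemma layer_real:
  fixes a t e :: real
  assumes a: "0 < a" and t: "0 \<le> t" and e: "0 < e"
  defines "K \<equiv> (LEAST k. t \<le> a * 2 ^ k)"
  shows "\<And>k. (a * 2 ^ k < t) = (k < K)"
    and "t powr e \<le> a powr e + ((2 powr e) - 1) * a powr e * (\<Sum>k<K. (2 powr e) ^ k)"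
    and "(\<Sum>k<K. (a * 2 ^ k) powr (1 + e)) \<le> 2 * t powr (1 + e)"
proof -
  have ex: "\<exists>k. t \<le> a * 2 ^ k"
  proof -
    obtain n where "t / a < 2 ^ n" using real_arch_pow[of 2 "t / a"] by auto
    then show ?thesis using a by (intro exI[of _ n]) (simp add: field_simps)
  qed
  have tK: "t \<le> a * 2 ^ K" unfolding K_def using ex by (rule LeastI_ex)
  have lt: "k < K \<Longrightarrow> a * 2 ^ k < t" for k
    using not_less_Least[of k "\<lambda>k. t \<le> a * 2 ^ k"] unfolding K_def by simp
  show iff: "(a * 2 ^ k < t) = (k < K)" for k
  proof
    assume h: "a * 2 ^ k < t"
    show "k < K"
    proof (rule ccontr)
      assume "\<not> k < K"
      then have "(2::real) ^ K \<le> 2 ^ k" by (intro power_increasing) auto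
      then have "a * 2 ^ K \<le> a * 2 ^ k" using a by simp
      then show False using h tK by simp
    qed
  qed (rule lt)
  define q where "q = (2::real) powr e"
  have q1: "1 < q" unfolding q_def using e by simp
  have "t powr e \<le> (a * 2 ^ K) powr e" using t tK e by (intro powr_mono2) auto
  also have "\<dots> = a powr e * q ^ K" unfolding q_def by (simp add: powr_mult pow2_powr)
  also have "\<dots> = a powr e + (q - 1) * a powr e * (\<Sum>k<K. q ^ k)"
    using q1 by (simp add: geometric_sum field_simps)
  finally show "t powr e \<le> a powr e + ((2 powr e) - 1) * a powr e * (\<Sum>k<K. (2 powr e) ^ k)"
    unfolding q_def .
  show "(\<Sum>k<K. (a * 2 ^ k) powr (1 + e)) \<le> 2 * t powr (1 + e)"
  proof (cases K)
    case 0 then show ?thesis using t by simp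
  next
    case (Suc m)
    define x where "x = (2::real) powr (1 + e)"
    have x2: "2 \<le> x" unfolding x_def using e
      by (metis powr_one_eq_one powr_mono less_add_same_cancel1 less_imp_le one_le_numeral powr_one_gt_zero_iff zero_less_numeral powr_one)
    have "(\<Sum>k<K. (a * 2 ^ k) powr (1 + e)) = (\<Sum>k<K. a powr (1 + e) * x ^ k)"
      unfolding x_def by (intro sum.cong) (auto simp: powr_mult pow2_powr)
    also have "\<dots> = a powr (1 + e) * (\<Sum>k<Suc m. x ^ k)" using Suc by (simp only: sum_distrib_left[symmetric])
    also have "\<dots> \<le> a powr (1 + e) * (2 * x ^ m)" using geo_le2[OF x2] by (intro mult_left_mono) auto
    also have "\<dots> = 2 * (a * 2 ^ m) powr (1 + e)" unfolding x_def by (simp add: powr_mult pow2_powr)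
    also have "\<dots> \<le> 2 * t powr (1 + e)"
      using lt[of m] Suc a e by (intro mult_left_mono powr_mono2) auto
    finally show ?thesis .
  qed
qed

lemma absorb:
  fixes I X :: ennreal
  assumes "I < top" "I \<le> X + ennreal (1/2) * I"
  shows "I \<le> 2 * X"
proof (cases "X = top")
  case True then show ?thesis by simp
next
  case False
  define x where "x = enn2real X"
  have real: "X = ennreal x" "0 \<le> x" using False by (simp_all add: x_def less_top)
  define r where "r = enn2real I"
  have r: "0 \<le> r" "I = ennreal r" using assms(1) by (simp_all add: r_def)
  have m: "ennreal (1/2) * ennreal r = ennreal (r / 2)" using r(1) by (subst ennreal_mult[symmetric]) auto
  have p: "ennreal x + ennreal (r / 2) = ennreal (x + r / 2)" using r(1) real(2) by simp
  have "ennreal r \<le> ennreal (x + r / 2)"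
    using assms(2) unfolding r(2) real(1) m p .
  then have "r \<le> x + r / 2" using r real by (subst (asm) ennreal_le_iff) auto
  then have "r \<le> 2 * x" by simp
  then have "ennreal r \<le> ennreal (2 * x)" by (rule ennreal_leI)
  then show ?thesis using r real by (simp add: ennreal_mult)
qed

locale fixed_e = fixed D v w c B C I0 N for D v w c B C I0 N +
  fixes e :: real
  assumes e: "0 < e" and small: "(2 powr e - 1) * (2 * B * c) \<le> 1/2"
begin

lemma aa0: assumes "aa I0 = 0" "J \<in> FF" shows "aa J = 0"
proof -
  have JD: "J \<in> D" using assms(2) by (rule FF_D)
  have "ennreal (aa J) * vmass v (Qbox J) = wmass (Qbox J)" using wm_eq[OF JD] by simp
  also have "\<dots> \<le> wmass (Qbox I0)" using wm_mono[OF FF_Q[OF assms(2)]] .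
  also have "\<dots> = 0" using wm_eq[OF I0] assms(1) by simp
  finally have "ennreal (aa J) * vmass v (Qbox J) = 0" by simp
  moreover have "vmass v (Qbox J) \<noteq> 0" using vm_Q_pos[OF JD] by simp
  ultimately show ?thesis using aa_nonneg[of J] by (auto simp: ennreal_eq_0_iff)
qed

lemma I_fin: "(\<integral>\<^sup>+ z\<in>Qbox I0. ennreal (ff z powr (1+e)) * ennreal (v z) \<partial>dA) < top"
proof -
  have "(\<integral>\<^sup>+ z\<in>Qbox I0. ennreal (ff z powr (1+e)) * ennreal (v z) \<partial>dA)
      \<le> (\<integral>\<^sup>+ z. ennreal (Amax powr (1+e)) * (ennreal (v z) * indicator (Qbox I0) z) \<partial>dA)"
  proof (intro nn_integral_mono)
    fix z
    have "ff z powr (1+e) \<le> Amax powr (1+e)" using ff_le_Amax ff_nonneg e by (intro powr_mono2) auto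
    then have "ennreal (ff z powr (1+e)) \<le> ennreal (Amax powr (1+e))" by (rule ennreal_leI)
    then show "ennreal (ff z powr (1+e)) * ennreal (v z) * indicator (Qbox I0) z \<le> ennreal (Amax powr (1+e)) * (ennreal (v z) * indicator (Qbox I0) z)"
      by (simp add: mult.assoc mult_right_mono)
  qed
  also have "\<dots> = ennreal (Amax powr (1+e)) * vmass v (Qbox I0)"
    unfolding vmass_def using I0 by (subst nn_integral_cmult) auto
  also have "\<dots> < top" using vm_Q_fin[OF I0] by (simp add: ennreal_mult_less_top)
  finally show ?thesis .
qed

end

context fixed_e
begin

lemma Om_ind:
  assumes a: "0 < aa I0" and z: "z \<in> Qbox I0"
  defines "K \<equiv> (LEAST k. ff z \<le> aa I0 * 2 ^ k)"
  shows "indicator (Om (aa I0 * 2 ^ k)) z = (if k < K then 1 else (0::ennreal))"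
proof -
  have "(aa I0 * 2 ^ k < ff z) = (k < K)"
    unfolding K_def using layer_real(1)[OF a ff_nonneg e] by blast
  then show ?thesis using z unfolding Om_def by (simp add: indicator_def)
qed

lemma ptwise_layer:
  assumes a: "0 < aa I0"
  shows "ennreal (ff z powr (1+e)) * ennreal (v z) * indicator (Qbox I0) z
    \<le> ennreal (aa I0 powr e) * (ennreal (ff z) * ennreal (v z) * indicator (Qbox I0) z)
      + ennreal ((2 powr e - 1) * aa I0 powr e) *
        (\<Sum>k. ennreal ((2 powr e) ^ k) * (ennreal (ff z) * ennreal (v z) * indicator (Om (aa I0 * 2 ^ k)) z))"
proof (cases "z \<in> Qbox I0")
  case False then show ?thesis by simp
next
  case True
  define t where "t = ff z"
  define a where "a = aa I0"
  define q where "q = (2::real) powr e"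
  define K where "K = (LEAST k. ff z \<le> aa I0 * 2 ^ k)"
  define S where "S = (\<Sum>k<K. q ^ k)"
  define Vz where "Vz = ennreal (v z)"
  have t0: "0 \<le> t" unfolding t_def by (rule ff_nonneg)
  have q1: "1 \<le> q" unfolding q_def using e by (intro ge_one_powr_ge_zero) auto
  have S0: "0 \<le> S" unfolding S_def using q1 by (intro sum_nonneg) simp
  have ind: "indicator (Om (a * 2 ^ k)) z = (if k < K then 1 else (0::ennreal))" for k
    unfolding a_def K_def using Om_ind[OF a True] .
  have "(\<Sum>k. ennreal (q ^ k) * (ennreal t * Vz * indicator (Om (a * 2 ^ k)) z))
      = (\<Sum>k<K. ennreal (q ^ k) * (ennreal t * Vz * indicator (Om (a * 2 ^ k)) z))"
    by (rule suminf_finite) (auto simp: ind)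
  also have "\<dots> = (\<Sum>k<K. ennreal (q ^ k)) * (ennreal t * Vz)"
    by (simp add: ind sum_distrib_right)
  also have "\<dots> = ennreal S * (ennreal t * Vz)" unfolding S_def using q1 by simp
  finally have sumeq: "(\<Sum>k. ennreal (q ^ k) * (ennreal t * Vz * indicator (Om (a * 2 ^ k)) z)) = ennreal S * (ennreal t * Vz)" .
  have real_ineq: "t powr (1 + e) \<le> (a powr e + (q - 1) * a powr e * S) * t"
  proof -
    have "t powr (1 + e) = t powr e * t" using t0 by (simp add: powr_add powr_one)
    also have "\<dots> \<le> (a powr e + (q - 1) * a powr e * S) * t"
      using layer_real(2)[OF a t0 e] t0 unfolding S_def q_def K_def t_def a_def
      by (intro mult_right_mono) auto
    finally show ?thesis .
  qed
  have nn1: "0 \<le> (q - 1) * a powr e" using q1 by simp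
  have "ennreal (t powr (1 + e)) * Vz \<le> ennreal ((a powr e + (q - 1) * a powr e * S) * t) * Vz"
    using real_ineq by (intro mult_right_mono ennreal_leI) auto
  also have "ennreal ((a powr e + (q - 1) * a powr e * S) * t) = (ennreal (a powr e) + ennreal ((q - 1) * a powr e) * ennreal S) * ennreal t"
    using nn1 S0 t0 by (simp add: ennreal_mult ennreal_plus)
  also have "(ennreal (a powr e) + ennreal ((q - 1) * a powr e) * ennreal S) * ennreal t * Vz
      = ennreal (a powr e) * (ennreal t * Vz) + ennreal ((q - 1) * a powr e) * (ennreal S * (ennreal t * Vz))"
    by (simp add: algebra_simps)
  finally show ?thesis using True sumeq unfolding t_def a_def q_def Vz_def by simp
qed

lemma ptwise_J2:
  assumes a: "0 < aa I0"
  shows "(\<Sum>k. ennreal ((aa I0 * 2 ^ k) powr (1+e)) * (ennreal (v z) * indicator (Om (aa I0 * 2 ^ k)) z))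
    \<le> 2 * (ennreal (ff z powr (1+e)) * ennreal (v z) * indicator (Qbox I0) z)"
proof (cases "z \<in> Qbox I0")
  case False
  then have "indicator (Om l) z = (0::ennreal)" for l unfolding Om_def by simp
  then show ?thesis by simp
next
  case True
  define K where "K = (LEAST k. ff z \<le> aa I0 * 2 ^ k)"
  have ind: "indicator (Om (aa I0 * 2 ^ k)) z = (if k < K then 1 else (0::ennreal))" for k
    unfolding K_def using Om_ind[OF a True] .
  have "(\<Sum>k. ennreal ((aa I0 * 2 ^ k) powr (1+e)) * (ennreal (v z) * indicator (Om (aa I0 * 2 ^ k)) z))
      = (\<Sum>k<K. ennreal ((aa I0 * 2 ^ k) powr (1+e)) * (ennreal (v z) * indicator (Om (aa I0 * 2 ^ k)) z))"
    by (rule suminf_finite) (auto simp: ind)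
  also have "\<dots> = (\<Sum>k<K. ennreal ((aa I0 * 2 ^ k) powr (1+e))) * ennreal (v z)"
    by (simp add: ind sum_distrib_right del: sum_ennreal)
  also have "\<dots> = ennreal (\<Sum>k<K. (aa I0 * 2 ^ k) powr (1+e)) * ennreal (v z)"
    by (subst sum_ennreal) auto
  also have "\<dots> \<le> ennreal (2 * ff z powr (1+e)) * ennreal (v z)"
    using layer_real(3)[OF a ff_nonneg e] unfolding K_def by (intro mult_right_mono ennreal_leI) auto
  also have "\<dots> = 2 * (ennreal (ff z powr (1+e)) * ennreal (v z) * indicator (Qbox I0) z)"
    using True by (simp add: ennreal_mult mult.assoc)
  finally show ?thesis .
qed

end

context fixed_e
begin

lemma Q0_sets[measurable]: "Qbox I0 \<in> sets dA" using Q_sets[OF I0] .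

lemma main_est:
  "(\<integral>\<^sup>+ z\<in>Qbox I0. ennreal (ff z powr (1+e)) * ennreal (v z) \<partial>dA) \<le> ennreal (2 * B * aa I0 powr (1+e)) * vmass v (Qbox I0)"
proof (cases "aa I0 = 0")
  case True
  have "ff z = 0" for z
  proof -
    obtain J where J: "J \<in> FF" "ff z = aa J * indicator (Qbox J) z" using ff_attain by blast
    then show ?thesis using aa0[OF True J(1)] by simp
  qed
  then show ?thesis by simp
next
  case False
  define a where "a = aa I0"
  have a: "0 < a" using False aa_nonneg[of I0] unfolding a_def by linarith
  have apos: "0 < aa I0" using a unfolding a_def .
  define q where "q = (2::real) powr e"
  have q1: "1 \<le> q" unfolding q_def using e by (intro ge_one_powr_ge_zero) auto
  define I where "I = (\<integral>\<^sup>+ z\<in>Qbox I0. ennreal (ff z powr (1+e)) * ennreal (v z) \<partial>dA)"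
  define F0 where "F0 = (\<lambda>z. ennreal (ff z) * ennreal (v z) * indicator (Qbox I0) z)"
  define G where "G = (\<lambda>k z. ennreal (ff z) * ennreal (v z) * indicator (Om (a * 2 ^ k)) z)"
  have F0m[measurable]: "F0 \<in> borel_measurable dA" unfolding F0_def by measurable
  have Gm[measurable]: "G k \<in> borel_measurable dA" for k unfolding G_def by measurable
  have "I \<le> (\<integral>\<^sup>+ z. ennreal (a powr e) * F0 z + ennreal ((q - 1) * a powr e) * (\<Sum>k. ennreal (q ^ k) * G k z) \<partial>dA)"
    unfolding I_def F0_def G_def a_def q_def using ptwise_layer[OF apos]
    by (intro nn_integral_mono) (simp add: a_def)
  also have "\<dots> = ennreal (a powr e) * integral\<^sup>N dA F0 + ennreal ((q - 1) * a powr e) * (\<Sum>k. ennreal (q ^ k) * integral\<^sup>N dA (G k))"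
    by (simp add: nn_integral_add nn_integral_cmult nn_integral_suminf)
  also have "\<dots> \<le> ennreal (a powr e) * (ennreal B * wmass (Qbox I0)) + ennreal ((q - 1) * a powr e) * (\<Sum>k. ennreal (q ^ k) * (ennreal (B * c * (a * 2 ^ k)) * vmass v (Om (a * 2 ^ k))))"
  proof (rule add_mono)
    show "ennreal (a powr e) * integral\<^sup>N dA F0 \<le> ennreal (a powr e) * (ennreal B * wmass (Qbox I0))"
      unfolding F0_def using int_ff_Q0 by (rule mult_left_mono) simp
    have "(\<Sum>k. ennreal (q ^ k) * integral\<^sup>N dA (G k)) \<le> (\<Sum>k. ennreal (q ^ k) * (ennreal (B * c * (a * 2 ^ k)) * vmass v (Om (a * 2 ^ k))))"
    proof (rule suminf_le)
      fix k
      have "aa I0 \<le> a * 2 ^ k" using a unfolding a_def by simp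
      then show "ennreal (q ^ k) * integral\<^sup>N dA (G k) \<le> ennreal (q ^ k) * (ennreal (B * c * (a * 2 ^ k)) * vmass v (Om (a * 2 ^ k)))"
        unfolding G_def using L6 by (intro mult_left_mono) auto
    qed auto
    then show "ennreal ((q - 1) * a powr e) * (\<Sum>k. ennreal (q ^ k) * integral\<^sup>N dA (G k)) \<le> ennreal ((q - 1) * a powr e) * (\<Sum>k. ennreal (q ^ k) * (ennreal (B * c * (a * 2 ^ k)) * vmass v (Om (a * 2 ^ k))))"
      by (rule mult_left_mono) simp
  qed
  also have "(\<Sum>k. ennreal (q ^ k) * (ennreal (B * c * (a * 2 ^ k)) * vmass v (Om (a * 2 ^ k))))
      = (\<Sum>k. ennreal (B * c * a powr (- e)) * (ennreal ((a * 2 ^ k) powr (1 + e)) * vmass v (Om (a * 2 ^ k))))"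
  proof (intro suminf_cong)
    fix k
    have "q ^ k * (B * c * (a * 2 ^ k)) = B * c * a powr (- e) * ((a * 2 ^ k) powr (1 + e))"
    proof -
      have "(a * 2 ^ k) powr (1 + e) = (a * 2 ^ k) * (a powr e * q ^ k)"
        using a unfolding q_def by (simp add: powr_add powr_mult pow2_powr)
      moreover have "a powr (- e) * a powr e = 1" using a by (simp add: powr_minus field_simps)
      ultimately show ?thesis by (simp add: algebra_simps)
    qed
    then have id: "ennreal (q ^ k * (B * c * (a * 2 ^ k))) = ennreal (B * c * a powr (- e) * ((a * 2 ^ k) powr (1 + e)))"
      by (rule arg_cong)
    have e1: "ennreal (q ^ k) * (ennreal (B * c * (a * 2 ^ k)) * vmass v (Om (a * 2 ^ k))) = ennreal (q ^ k * (B * c * (a * 2 ^ k))) * vmass v (Om (a * 2 ^ k))"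
      using q1 B1 c1 a by (subst ennreal_mult) (auto simp: mult.assoc)
    have e2: "ennreal (B * c * a powr (- e)) * (ennreal ((a * 2 ^ k) powr (1 + e)) * vmass v (Om (a * 2 ^ k))) = ennreal (B * c * a powr (- e) * ((a * 2 ^ k) powr (1 + e))) * vmass v (Om (a * 2 ^ k))"
      using q1 B1 c1 a by (subst ennreal_mult) (auto simp: mult.assoc)
    show "ennreal (q ^ k) * (ennreal (B * c * (a * 2 ^ k)) * vmass v (Om (a * 2 ^ k))) = ennreal (B * c * a powr (- e)) * (ennreal ((a * 2 ^ k) powr (1 + e)) * vmass v (Om (a * 2 ^ k)))"
      unfolding e1 e2 id ..
  qed
  also have "\<dots> = ennreal (B * c * a powr (- e)) * (\<Sum>k. ennreal ((a * 2 ^ k) powr (1 + e)) * vmass v (Om (a * 2 ^ k)))"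
    by (rule ennreal_suminf_cmult)
  finally have step: "I \<le> ennreal (a powr e) * (ennreal B * wmass (Qbox I0)) + ennreal ((q - 1) * a powr e) * (ennreal (B * c * a powr (- e)) * (\<Sum>k. ennreal ((a * 2 ^ k) powr (1 + e)) * vmass v (Om (a * 2 ^ k))))" .
  have J2: "(\<Sum>k. ennreal ((a * 2 ^ k) powr (1 + e)) * vmass v (Om (a * 2 ^ k))) \<le> 2 * I"
  proof -
    have "(\<Sum>k. ennreal ((a * 2 ^ k) powr (1 + e)) * vmass v (Om (a * 2 ^ k)))
        = (\<Sum>k. \<integral>\<^sup>+ z. ennreal ((a * 2 ^ k) powr (1 + e)) * (ennreal (v z) * indicator (Om (a * 2 ^ k)) z) \<partial>dA)"
      unfolding vmass_def by (intro suminf_cong) (simp add: nn_integral_cmult)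
    also have "\<dots> = (\<integral>\<^sup>+ z. (\<Sum>k. ennreal ((a * 2 ^ k) powr (1 + e)) * (ennreal (v z) * indicator (Om (a * 2 ^ k)) z)) \<partial>dA)"
      by (rule nn_integral_suminf[symmetric]) measurable
    also have "\<dots> \<le> (\<integral>\<^sup>+ z. 2 * (ennreal (ff z powr (1+e)) * ennreal (v z) * indicator (Qbox I0) z) \<partial>dA)"
      using ptwise_J2[OF apos] unfolding a_def by (intro nn_integral_mono) simp
    also have "\<dots> = 2 * I" unfolding I_def by (simp add: nn_integral_cmult)
    finally show ?thesis .
  qed
  have coef: "ennreal ((q - 1) * a powr e) * ennreal (B * c * a powr (- e)) * 2 \<le> ennreal (1/2)"
  proof -
    have "(q - 1) * a powr e * (B * c * a powr (- e)) * 2 = (q - 1) * (2 * B * c)"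
      using a by (simp add: powr_minus field_simps)
    also have "\<dots> \<le> 1/2" using small unfolding q_def .
    finally have "(q - 1) * a powr e * (B * c * a powr (- e)) * 2 \<le> 1/2" .
    then have "ennreal ((q - 1) * a powr e * (B * c * a powr (- e)) * 2) \<le> ennreal (1/2)" by (rule ennreal_leI)
    then show ?thesis using q1 B1 c1 a by (simp add: ennreal_mult)
  qed
  have "I \<le> ennreal (a powr e) * (ennreal B * wmass (Qbox I0)) + ennreal (1/2) * I"
  proof -
    have "ennreal ((q - 1) * a powr e) * (ennreal (B * c * a powr (- e)) * (\<Sum>k. ennreal ((a * 2 ^ k) powr (1 + e)) * vmass v (Om (a * 2 ^ k))))
        \<le> ennreal ((q - 1) * a powr e) * (ennreal (B * c * a powr (- e)) * (2 * I))"
      using J2 by (intro mult_left_mono) auto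
    also have "\<dots> = (ennreal ((q - 1) * a powr e) * ennreal (B * c * a powr (- e)) * 2) * I"
      by (simp add: mult_ac)
    also have "\<dots> \<le> ennreal (1/2) * I" using coef by (intro mult_right_mono) auto
    finally show ?thesis using step by (meson add_left_mono order_trans)
  qed
  then have "I \<le> 2 * (ennreal (a powr e) * (ennreal B * wmass (Qbox I0)))"
    using I_fin unfolding I_def by (intro absorb) auto
  also have "\<dots> = ennreal (2 * B * a powr (1 + e)) * vmass v (Qbox I0)"
  proof -
    have "a powr (1 + e) = a powr e * a" using a by (simp add: powr_add)
    then show ?thesis using wm_eq[OF I0] a B1 unfolding a_def by (simp add: ennreal_mult mult_ac)
  qed
  finally show ?thesis unfolding I_def a_def .
qed

end

locale setting_e = setting D v w c B C for D v w c B C +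
  fixes e :: real
  assumes e: "0 < e" and small: "(2 powr e - 1) * (2 * B * c) \<le> 1/2"
begin

definition K0 :: real where "K0 = C^2 * c^2"

lemma K0_pos: "1 \<le> K0"
proof -
  have a: "1 \<le> C^2" using one_le_power[OF C1] .
  have b: "1 \<le> c^2" using one_le_power[OF c1] .
  have "1 * 1 \<le> C^2 * c^2" using a b by (intro mult_mono) auto
  then show ?thesis unfolding K0_def by simp
qed

lemma cball_eq: "{z::complex. l \<le> 1 - norm z} = cball 0 (1 - l)" by (auto simp: dist_norm)

lemma trunc:
  assumes I0: "I0 \<in> D"
  shows "(\<integral>\<^sup>+ z\<in>Qbox I0. ennreal (\<bar>w z\<bar> powr (1+e)) * ennreal (v z) \<partial>dA)
     \<le> ennreal (K0 powr (1+e) * (2 * B * aa I0 powr (1+e))) * vmass v (Qbox I0)"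
proof -
  define A where "A = (\<lambda>N::nat. Qbox I0 \<inter> {z. snd I0 / 2 ^ (N+1) \<le> 1 - norm z})"
  define g where "g = (\<lambda>z. ennreal (\<bar>w z\<bar> powr (1+e)) * ennreal (v z))"
  have gm[measurable]: "g \<in> borel_measurable dA" unfolding g_def by measurable
  have Am[measurable]: "A N \<in> sets dA" for N
  proof -
    have "{z::complex. snd I0 / 2 ^ (N+1) \<le> 1 - norm z} \<in> sets lebesgue"
      unfolding cball_eq by (intro closed_sets_lebesgue) simp
    then show ?thesis unfolding A_def using Q_sets[OF I0] by (simp only: sets_dA sets.Int)
  qed
  have bound: "(\<integral>\<^sup>+ z. g z * indicator (A N) z \<partial>dA) \<le> ennreal (K0 powr (1+e) * (2 * B * aa I0 powr (1+e))) * vmass v (Qbox I0)" for N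
  proof -
    interpret F: fixed_e D v w c B C I0 N e
      by unfold_locales (use I0 e small in auto)
    have "(\<integral>\<^sup>+ z. g z * indicator (A N) z \<partial>dA) \<le> (\<integral>\<^sup>+ z. ennreal (K0 powr (1+e)) * (ennreal (F.ff z powr (1+e)) * ennreal (v z) * indicator (Qbox I0) z) \<partial>dA)"
    proof (intro nn_integral_mono)
      fix z
      show "g z * indicator (A N) z \<le> ennreal (K0 powr (1+e)) * (ennreal (F.ff z powr (1+e)) * ennreal (v z) * indicator (Qbox I0) z)"
      proof (cases "z \<in> A N")
        case False then show ?thesis by simp
      next
        case True
        then have zQ: "z \<in> Qbox I0" and zN: "snd I0 / 2 ^ (N+1) \<le> 1 - norm z" unfolding A_def by auto
        obtain J where J: "J \<in> F.FF" "z \<in> Tbox J" using cover[OF I0 zQ zN] by blast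
        have "\<bar>w z\<bar> \<le> K0 * aa J" using ptwise[OF F.FF_D[OF J(1)] J(2)] unfolding K0_def .
        also have "\<dots> \<le> K0 * F.ff z" using F.ff_ge[OF J(1) subsetD[OF T_sub_Q[OF F.FF_D[OF J(1)]] J(2)]] K0_pos
          by (intro mult_left_mono) auto
        finally have "\<bar>w z\<bar> powr (1+e) \<le> (K0 * F.ff z) powr (1+e)" using e by (intro powr_mono2) auto
        also have "\<dots> = K0 powr (1+e) * F.ff z powr (1+e)" by (simp add: powr_mult)
        finally have "ennreal (\<bar>w z\<bar> powr (1+e)) \<le> ennreal (K0 powr (1+e)) * ennreal (F.ff z powr (1+e))"
          by (simp add: ennreal_mult[symmetric] ennreal_leI)
        then have "ennreal (\<bar>w z\<bar> powr (1+e)) * ennreal (v z) \<le> ennreal (K0 powr (1+e)) * ennreal (F.ff z powr (1+e)) * ennreal (v z)"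
          by (rule mult_right_mono) simp
        then show ?thesis using True zQ unfolding g_def by (simp add: mult.assoc)
      qed
    qed
    also have "\<dots> = ennreal (K0 powr (1+e)) * (\<integral>\<^sup>+ z\<in>Qbox I0. ennreal (F.ff z powr (1+e)) * ennreal (v z) \<partial>dA)"
      by (rule nn_integral_cmult) measurable
    also have "\<dots> \<le> ennreal (K0 powr (1+e)) * (ennreal (2 * B * aa I0 powr (1+e)) * vmass v (Qbox I0))"
      using F.main_est by (rule mult_left_mono) simp
    also have "\<dots> = ennreal (K0 powr (1+e) * (2 * B * aa I0 powr (1+e))) * vmass v (Qbox I0)"
      using B1 by (simp add: ennreal_mult mult.assoc)
    finally show ?thesis .
  qed
  have inc: "incseq (\<lambda>N z. g z * indicator (A N) z)"
  proof (intro monoI le_funI)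
    fix N M :: nat and z assume "N \<le> M"
    then have "(2::real) ^ (N+1) \<le> 2 ^ (M+1)" by (intro power_increasing) auto
    then have "snd I0 / 2 ^ (M+1) \<le> snd I0 / 2 ^ (N+1)" using len[OF I0] by (intro divide_left_mono) auto
    then have "A N \<subseteq> A M" unfolding A_def by auto
    then show "g z * indicator (A N) z \<le> g z * indicator (A M) z"
      by (intro mult_left_mono) (auto simp: indicator_def)
  qed
  have sup: "(SUP N. g z * indicator (A N) z) = g z * indicator (Qbox I0) z" for z
  proof (cases "z \<in> Qbox I0")
    case False then show ?thesis unfolding A_def by simp
  next
    case True
    obtain r u where ru: "z = complex_of_real r * u" "u \<in> arc_set I0" "0 \<le> r" "r < 1"
      using True unfolding Qbox_pol pol_def by blast
    have nz: "norm z = r" using ru arc_norm by (simp add: norm_mult)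
    obtain N where "snd I0 / (1 - r) < 2 ^ (N+1)"
      using real_arch_pow[of 2 "snd I0 / (1 - r)"] by (metis less_le_trans one_less_numeral_iff power_increasing_iff semiring_norm(76) le_add1)
    then have "snd I0 / 2 ^ (N+1) \<le> 1 - norm z" using ru nz by (simp add: field_simps)
    then have zA: "z \<in> A N" unfolding A_def using True by simp
    show ?thesis
    proof (rule antisym)
      show "(SUP N. g z * indicator (A N) z) \<le> g z * indicator (Qbox I0) z"
        using True by (intro SUP_least) (auto simp: indicator_def A_def)
      have "g z * indicator (Qbox I0) z = g z * indicator (A N) z" using True zA by simp
      also have "\<dots> \<le> (SUP N. g z * indicator (A N) z)" by (rule SUP_upper) simp
      finally show "g z * indicator (Qbox I0) z \<le> (SUP N. g z * indicator (A N) z)" .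
    qed
  qed
  have "(\<integral>\<^sup>+ z\<in>Qbox I0. ennreal (\<bar>w z\<bar> powr (1+e)) * ennreal (v z) \<partial>dA) = (\<integral>\<^sup>+ z. g z * indicator (Qbox I0) z \<partial>dA)"
    by (simp add: g_def)
  also have "\<dots> = (\<integral>\<^sup>+ z. (SUP N. g z * indicator (A N) z) \<partial>dA)"
    by (simp only: sup)
  also have "\<dots> = (SUP N. \<integral>\<^sup>+ z. g z * indicator (A N) z \<partial>dA)"
    by (rule nn_integral_monotone_convergence_SUP[OF inc]) measurable
  also have "\<dots> \<le> ennreal (K0 powr (1+e) * (2 * B * aa I0 powr (1+e))) * vmass v (Qbox I0)"
    by (intro SUP_least bound)
  finally show ?thesis .
qed

end

context setting_e
begin

lemma RH_ratio:
  assumes I0: "I0 \<in> D"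
  shows "avgp (1+e) v (Qbox I0) w / avg v (Qbox I0) (\<lambda>z. ennreal \<bar>w z\<bar>) \<le> ennreal (K0 * (2 * B) powr (1 / (1+e)))"
proof -
  define t where "t = 1 + e"
  have t: "0 < t" "1 < t" unfolding t_def using e by auto
  define m where "m = vmass v (Qbox I0)"
  have m: "m \<noteq> 0" "m < top" unfolding m_def using vm_Q_pos[OF I0] vm_Q_fin[OF I0] by auto
  define a where "a = aa I0"
  have a0: "0 \<le> a" unfolding a_def by simp
  define R where "R = K0 * (2 * B) powr (1 / t)"
  have R0: "0 \<le> R" unfolding R_def using K0_pos by simp
  define X where "X = K0 powr t * (2 * B * a powr t)"
  have X0: "0 \<le> X" unfolding X_def using B1 by simp
  define A where "A = avg v (Qbox I0) (\<lambda>z. ennreal (\<bar>w z\<bar> powr t))"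
  have "A = (\<integral>\<^sup>+ z\<in>Qbox I0. ennreal (\<bar>w z\<bar> powr (1+e)) * ennreal (v z) \<partial>dA) / m"
    unfolding A_def avg_def m_def vmass_def t_def ..
  also have "\<dots> \<le> (ennreal X * m) / m"
    using trunc[OF I0] unfolding X_def m_def a_def t_def by (rule divide_right_mono_ennreal)
  also have "\<dots> = ennreal X" using m by (simp add: ennreal_mult_divide_eq)
  finally have AX: "A \<le> ennreal X" .
  then have Atop: "A \<noteq> top" by (auto simp: top_unique)
  have avgp_eq: "avgp t v (Qbox I0) w = ennreal (enn2real A powr (1 / t))"
    unfolding avgp_def A_def[symmetric] Let_def using Atop by simp
  have "enn2real A \<le> X" using enn2real_mono[OF AX] X0 by simp
  then have "enn2real A powr (1 / t) \<le> X powr (1 / t)" using t by (intro powr_mono2) auto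
  also have "X powr (1 / t) = R * a"
  proof -
    have p1: "(K0 powr t) powr (1 / t) = K0" using t K0_pos by (simp add: powr_powr powr_one)
    have p2: "(a powr t) powr (1 / t) = a" using t a0 by (simp add: powr_powr powr_one)
    show ?thesis unfolding X_def R_def using p1 p2 by (simp add: powr_mult mult_ac)
  qed
  finally have le: "avgp t v (Qbox I0) w \<le> ennreal (R * a)" unfolding avgp_eq by (rule ennreal_leI)
  have avgeq: "avg v (Qbox I0) (\<lambda>z. ennreal \<bar>w z\<bar>) = ennreal a" unfolding a_def using avg_eq[OF I0] .
  show ?thesis
  proof (cases "a = 0")
    case True
    then have "avgp t v (Qbox I0) w = 0" using le by simp
    then show ?thesis unfolding t_def by simp
  next
    case False
    then have apos: "0 < a" using a0 by simp
    have "avgp t v (Qbox I0) w / ennreal a \<le> ennreal (R * a) / ennreal a"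
      using le by (rule divide_right_mono_ennreal)
    also have "\<dots> = ennreal R" using apos R0 by (simp add: divide_ennreal)
    finally show ?thesis unfolding avgeq t_def R_def[unfolded t_def] .
  qed
qed

lemma RH_concl: "RH D v (1+e) w"
  unfolding RH_def
proof (intro conjI ballI)
  show "1 < 1 + e" using e by simp
  fix I assume "I \<in> D" then show "avg v (Qbox I) (\<lambda>z. ennreal \<bar>w z\<bar>) < top" by (rule avg_fin)
next
  have "(SUP I\<in>D. avgp (1+e) v (Qbox I) w / avg v (Qbox I) (\<lambda>z. ennreal \<bar>w z\<bar>)) \<le> ennreal (K0 * (2 * B) powr (1 / (1+e)))"
    by (intro SUP_least RH_ratio)
  also have "\<dots> < top" by simp
  finally show "(SUP I\<in>D. avgp (1+e) v (Qbox I) w / avg v (Qbox I) (\<lambda>z. ennreal \<bar>w z\<bar>)) < top" .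
qed

end

lemma doubling_mono: assumes "doubling D v c" "c \<le> c'" shows "doubling D v c'"
proof -
  have c: "0 < c" using assms(1) unfolding doubling_def by simp
  show ?thesis unfolding doubling_def
  proof (intro conjI ballI impI)
    show "0 < c'" using c assms(2) by simp
    fix I J assume IJ: "I \<in> D" "J \<in> D" "arc_set I \<subseteq> arc_set J \<and> arc_len J = 2 * arc_len I"
    have h: "ennreal (1/c) * vmass v (Qbox J) \<le> vmass v (Qbox I)" "vmass v (Qbox I) \<le> ennreal c * vmass v (Tbox I)"
      using assms(1) IJ unfolding doubling_def by blast+
    have "ennreal (1/c') \<le> ennreal (1/c)" using c assms(2) by (intro ennreal_leI) (simp add: frac_le)
    then have "ennreal (1/c') * vmass v (Qbox J) \<le> ennreal (1/c) * vmass v (Qbox J)" by (rule mult_right_mono) simp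
    then show "ennreal (1/c') * vmass v (Qbox J) \<le> vmass v (Qbox I)" using h(1) by (rule order_trans)
    have "ennreal c * vmass v (Tbox I) \<le> ennreal c' * vmass v (Tbox I)" using assms(2) by (intro mult_right_mono ennreal_leI) auto
    then show "vmass v (Qbox I) \<le> ennreal c' * vmass v (Tbox I)" using order_trans[OF h(2)] by blast
  qed
qed

lemma apr_abs:
  fixes x y C :: real
  assumes "0 < C" "y / C \<le> x" "x \<le> C * y"
  shows "\<bar>x\<bar> \<le> max C (1/C) * \<bar>y\<bar>"
proof (cases "0 \<le> y")
  case True
  have "0 \<le> y / C" using True assms(1) by simp
  then have "0 \<le> x" using assms(2) by linarith
  then have "\<bar>x\<bar> \<le> C * \<bar>y\<bar>" using assms(3) True by simp
  also have "\<dots> \<le> max C (1/C) * \<bar>y\<bar>" by (intro mult_right_mono) auto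
  finally show ?thesis .
next
  case False
  have "C * y < 0" using False assms(1) by (simp add: mult_pos_neg)
  then have "x < 0" using assms(3) by linarith
  then have xn: "\<bar>x\<bar> = - x" by simp
  have h: "- x \<le> - (y / C)" using assms(2) by linarith
  have "\<bar>y\<bar> / C = - (y / C)" using False by simp
  then have "\<bar>x\<bar> \<le> \<bar>y\<bar> / C" using h xn by simp
  also have "\<dots> = (1/C) * \<bar>y\<bar>" by simp
  also have "\<dots> \<le> max C (1/C) * \<bar>y\<bar>" by (intro mult_right_mono) auto
  finally show ?thesis .
qed

theorem proposition3p4:
  fixes B c :: real
  shows "\<exists>\<tau>>1. \<forall>D v w. dyadic_grid D \<and> weight v \<and> doubling D v c \<and>
           weight w \<and> Binf D v w \<and> Binf_const D v w = ennreal B \<and> APR D w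
           \<longrightarrow> RH D v \<tau> w"
proof -
  define B' where "B' = max B 1"
  define c' where "c' = max c 1"
  have B'1: "1 \<le> B'" and c'1: "1 \<le> c'" unfolding B'_def c'_def by auto
  define e where "e = log 2 (1 + 1 / (4 * B' * c'))"
  have pos: "0 < 1 / (4 * B' * c')" using B'1 c'1 by simp
  have p1: "0 < 1 + 1 / (4 * B' * c')" "1 < 1 + 1 / (4 * B' * c')" using pos by linarith+
  have e: "0 < e" unfolding e_def by (subst zero_less_log_cancel_iff) (simp, rule p1(1), rule p1(2))
  have q: "2 powr e = 1 + 1 / (4 * B' * c')" unfolding e_def by (rule powr_log_cancel) (simp, simp, rule p1(1))
  have small: "(2 powr e - 1) * (2 * B' * c') \<le> 1/2" unfolding q using B'1 c'1 by (simp add: field_simps)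
  show ?thesis
  proof (intro exI[of _ "1 + e"] conjI allI impI)
    show "1 < 1 + e" using e by simp
    fix D v w
    assume H: "dyadic_grid D \<and> weight v \<and> doubling D v c \<and> weight w \<and> Binf D v w \<and> Binf_const D v w = ennreal B \<and> APR D w"
    obtain C where C: "C > 0" "\<forall>I\<in>D. \<forall>z1\<in>Tbox I. \<forall>z2\<in>Tbox I. w z2 / C \<le> w z1 \<and> w z1 \<le> C * w z2"
      using H unfolding APR_def by blast
    define C' where "C' = max C (1/C)"
    have C'1: "1 \<le> C'"
    proof (cases "1 \<le> C")
      case True then show ?thesis unfolding C'_def by simp
    next
      case False then have "1 \<le> 1 / C" using C(1) by simp
      then show ?thesis unfolding C'_def by simp
    qed
    interpret S: setting_e D v w c' B' C' e
    proof (unfold_locales)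
      show "dyadic_grid D" using H by simp
      show "v \<in> borel_measurable lebesgue" using H unfolding weight_def by simp
      show "\<And>K. compact K \<Longrightarrow> K \<subseteq> ball 0 1 \<Longrightarrow> set_integrable dA K v" using H unfolding weight_def by simp
      show "AE z in dA. z \<in> ball 0 1 \<longrightarrow> 0 < v z" using H unfolding weight_def by simp
      show "doubling D v c'" using H doubling_mono c'_def by auto
      show "1 \<le> c'" by (rule c'1)
      show "w \<in> borel_measurable lebesgue" using H unfolding weight_def by simp
      show "\<And>I. I \<in> D \<Longrightarrow> avg v (Qbox I) (\<lambda>z. ennreal \<bar>w z\<bar>) < top" using H unfolding Binf_def by simp
      show "Binf_const D v w \<le> ennreal B'" using H unfolding B'_def by (simp add: ennreal_leI)
      show "1 \<le> B'" by (rule B'1)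
      show "1 \<le> C'" by (rule C'1)
      show "\<And>I z1 z2. I \<in> D \<Longrightarrow> z1 \<in> Tbox I \<Longrightarrow> z2 \<in> Tbox I \<Longrightarrow> \<bar>w z1\<bar> \<le> C' * \<bar>w z2\<bar>"
        using C apr_abs unfolding C'_def by blast
      show "0 < e" by (rule e)
      show "(2 powr e - 1) * (2 * B' * c') \<le> 1/2" by (rule small)
    qed
    show "RH D v (1 + e) w" by (rule S.RH_concl)
  qed
qed

end
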